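(* Let $q$ be a prime power, $s\geq1$, $n=q^{s-1}$, and let $\mathcal{RM}_q(1,s-1)$ be the first order $q$-ary Reed-Muller code. Its extended weight enumerator is \[ W_{\mathcal{RM}_q(1,s-1)}(X,Y,T)=\sum_{r=1}^{s}\left(\prod_{j=0}^{r-1}(T-q^j)\right)\begin{bmatrix} s-1\\ r-1\end{bmatrix}_q Y^n+\sum_{r=0}^{s-1}\left(\prod_{j=0}^{r-1}(T-q^j)\right)q^r\begin{bmatrix} s-1\\ r\end{bmatrix}_q X^{q^{s-1-r}}Y^{q^{s-1}-q^{s-1-r}}. \]
   Context: $\mathcal{RM}_q(1,s-1)$ is the linear $[q^{s-1},s]$ code over $\mathbb{F}_q$ generated by the matrix whose first row is all ones and whose columns, restricted to the remaining $s-1$ rows, run through all vectors of $\mathbb{F}_q^{s-1}$. For a linear $[n,k]$ code $C$ over $\mathbb{F}_q$ and $m\geq1$, the extension code $C\otimes\mathbb{F}_{q^m}$ is the $\mathbb{F}_{q^m}$-linear span of $C$ in $\mathbb{F}_{q^m}^n$. There are (uniquely determined) polynomials $A_w(T)\in\mathbb{Z}[T]$ with $A_w(q^m)$ equal to the number of words of Hamming weight $w$ in $C\otimes\mathbb{F}_{q^m}$ for all $m\geq1$; the extended weight enumerator is $W_C(X,Y,T)=\sum_{w=0}^nA_w(T)X^{n-w}Y^w$. $\begin{bmatrix} a\\ b\end{bmatrix}_q$ is the Gaussian binomial coefficient and the empty product equals $1$. *)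

theory Defs
  imports "HOL-Algebra.Ring" "HOL-Algebra.RingHom" "HOL-Computational_Algebra.Polynomial"
begin

text \<open>Coordinates of RM_q(1,s-1) over the field F: the points of F^(s-1),
  represented as functions nat => carrier F that are zero from index s-1 on.\<close>
definition RM_points :: "('a, 'c) ring_scheme \<Rightarrow> nat \<Rightarrow> (nat \<Rightarrow> 'a) set" where
  "RM_points F s = {v. (\<forall>i<s - 1. v i \<in> carrier F) \<and> (\<forall>i\<ge>s - 1. v i = \<zero>\<^bsub>F\<^esub>)}"

text \<open>The code RM_q(1,s-1) over F: the F-linear span of the rows of its generator
  matrix (first row all ones, remaining rows the coordinates of the points).
  Words are functions on the coordinate set, set to zero outside it.\<close>
definition RM_code :: "('a, 'c) ring_scheme \<Rightarrow> nat \<Rightarrow> ((nat \<Rightarrow> 'a) \<Rightarrow> 'a) set" where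
  "RM_code F s = {c. \<exists>a0 \<in> carrier F. \<exists>a \<in> {0..<s - 1} \<rightarrow> carrier F.
      (\<forall>v \<in> RM_points F s. c v = a0 \<oplus>\<^bsub>F\<^esub> (\<Oplus>\<^bsub>F\<^esub> i\<in>{0..<s - 1}. a i \<otimes>\<^bsub>F\<^esub> v i)) \<and>
      (\<forall>v. v \<notin> RM_points F s \<longrightarrow> c v = \<zero>\<^bsub>F\<^esub>)}"

text \<open>The extension code C \<otimes> K: the K-linear span of the image of C under the field
  embedding sigma : F \<rightarrow> K.\<close>
definition ext_code :: "('a, 'c) ring_scheme \<Rightarrow> ('b, 'd) ring_scheme \<Rightarrow> ('a \<Rightarrow> 'b)
    \<Rightarrow> (nat \<Rightarrow> 'a) set \<Rightarrow> ((nat \<Rightarrow> 'a) \<Rightarrow> 'a) set \<Rightarrow> ((nat \<Rightarrow> 'a) \<Rightarrow> 'b) set" where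
  "ext_code F K \<sigma> P C = {c. \<exists>S. S \<subseteq> C \<and> finite S \<and> (\<exists>l \<in> S \<rightarrow> carrier K.
      (\<forall>v \<in> P. c v = (\<Oplus>\<^bsub>K\<^esub> c'\<in>S. l c' \<otimes>\<^bsub>K\<^esub> \<sigma> (c' v))) \<and>
      (\<forall>v. v \<notin> P \<longrightarrow> c v = \<zero>\<^bsub>K\<^esub>))}"

definition ham_wt :: "('b, 'd) ring_scheme \<Rightarrow> (nat \<Rightarrow> 'a) set \<Rightarrow> ((nat \<Rightarrow> 'a) \<Rightarrow> 'b) \<Rightarrow> nat" where
  "ham_wt K P c = card {v \<in> P. c v \<noteq> \<zero>\<^bsub>K\<^esub>}"

text \<open>The polynomial A_w(T) of RM_q(1,s-1) over F (q = |F|): the integer polynomial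
  whose value at q^m is the number of weight-w words of the extension code over any
  field K with q^m elements (carrier taken in nat, which loses nothing up to
  isomorphism) and any embedding F \<rightarrow> K, for all m \<ge> 1.\<close>
definition RM_ext_A :: "('a, 'c) ring_scheme \<Rightarrow> nat \<Rightarrow> nat \<Rightarrow> int poly" where
  "RM_ext_A F s w = (THE A. \<forall>m\<ge>1. \<forall>(K :: nat ring) \<sigma>.
      field K \<and> card (carrier K) = card (carrier F) ^ m \<and> \<sigma> \<in> ring_hom F K \<longrightarrow>
      int (card {c \<in> ext_code F K \<sigma> (RM_points F s) (RM_code F s).
                   ham_wt K (RM_points F s) c = w}) = poly A (int (card (carrier F) ^ m)))"

definition RM_ext_W :: "('a, 'c) ring_scheme \<Rightarrow> nat \<Rightarrow> real \<Rightarrow> real \<Rightarrow> real \<Rightarrow> real" where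
  "RM_ext_W F s X Y T = (\<Sum>w = 0..card (carrier F) ^ (s - 1).
      poly (map_poly real_of_int (RM_ext_A F s w)) T * X ^ (card (carrier F) ^ (s - 1) - w) * Y ^ w)"

definition gauss_binom :: "nat \<Rightarrow> nat \<Rightarrow> nat \<Rightarrow> real" where
  "gauss_binom q a b = (if b \<le> a then
      (\<Prod>i<b. (real q ^ (a - i) - 1) / (real q ^ (i + 1) - 1)) else 0)"

end

theory Submission
  imports Defs "HOL-Algebra.Algebraic_Closure" "HOL-Algebra.Weak_Morphisms" "HOL-Algebra.Multiplicative_Group"
begin

no_notation var (\<open>X\<index>\<close>)

locale rmx = F: field F + K: field K
  for F :: "('a, 'c) ring_scheme" and K :: "('b, 'd) ring_scheme" (structure) +
  fixes \<sigma> :: "'a \<Rightarrow> 'b"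
  assumes hom: "\<sigma> \<in> ring_hom F K"
    and finF: "finite (carrier F)" and finK: "finite (carrier K)"
begin

sublocale H: ring_hom_cring F K \<sigma>
  using hom by (intro ring_hom_cringI ring_hom_ringI2 F.cring_axioms K.cring_axioms F.ring_axioms K.ring_axioms)

abbreviation q where "q \<equiv> card (carrier F)"

lemma q_ge2: "q \<ge> 2"
proof -
  have "{\<zero>\<^bsub>F\<^esub>, \<one>\<^bsub>F\<^esub>} \<subseteq> carrier F" by simp
  hence "card {\<zero>\<^bsub>F\<^esub>, \<one>\<^bsub>F\<^esub>} \<le> q" using finF by (rule card_mono[rotated])
  thus ?thesis using F.one_not_zero by simp
qed

lemma sigma_nz: "c \<in> carrier F \<Longrightarrow> c \<noteq> \<zero>\<^bsub>F\<^esub> \<Longrightarrow> \<sigma> c \<noteq> \<zero>"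
proof
  assume c: "c \<in> carrier F" "c \<noteq> \<zero>\<^bsub>F\<^esub>" and z: "\<sigma> c = \<zero>"
  have "inv\<^bsub>F\<^esub> c \<in> carrier F" "c \<otimes>\<^bsub>F\<^esub> inv\<^bsub>F\<^esub> c = \<one>\<^bsub>F\<^esub>"
    using c F.field_Units by auto
  hence "\<sigma> (c \<otimes>\<^bsub>F\<^esub> inv\<^bsub>F\<^esub> c) = \<one>" by simp
  moreover have "\<sigma> (c \<otimes>\<^bsub>F\<^esub> inv\<^bsub>F\<^esub> c) = \<zero>"
    using c \<open>inv\<^bsub>F\<^esub> c \<in> carrier F\<close> z by simp
  ultimately show False by simp
qed

definition pts :: "nat \<Rightarrow> (nat \<Rightarrow> 'a) set" where
  "pts k = {v. (\<forall>i<k. v i \<in> carrier F) \<and> (\<forall>i\<ge>k. v i = \<zero>\<^bsub>F\<^esub>)}"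

definition lin :: "nat \<Rightarrow> (nat \<Rightarrow> 'b) \<Rightarrow> (nat \<Rightarrow> 'a) \<Rightarrow> 'b" where
  "lin k a v = (\<Oplus>i\<in>{0..<k}. a i \<otimes> \<sigma> (v i))"

definition img :: "nat \<Rightarrow> (nat \<Rightarrow> 'b) \<Rightarrow> 'b set" where
  "img k a = lin k a ` pts k"

definition fsub :: "'b set \<Rightarrow> bool" where
  "fsub W \<longleftrightarrow> W \<subseteq> carrier K \<and> \<zero> \<in> W \<and> (\<forall>x\<in>W. \<forall>y\<in>W. x \<oplus> y \<in> W)
     \<and> (\<forall>c\<in>carrier F. \<forall>x\<in>W. \<sigma> c \<otimes> x \<in> W)"

definition ext :: "'b set \<Rightarrow> 'b \<Rightarrow> 'b set" where
  "ext W b = {x \<oplus> b \<otimes> \<sigma> c | x c. x \<in> W \<and> c \<in> carrier F}"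

lemma pts_Suc: "pts (Suc k) = (\<lambda>(w, c). w(k := c)) ` (pts k \<times> carrier F)"
proof (intro equalityI subsetI)
  fix v assume v: "v \<in> pts (Suc k)"
  have "v(k := \<zero>\<^bsub>F\<^esub>) \<in> pts k" "v k \<in> carrier F" using v by (auto simp: pts_def)
  moreover have "v = (v(k := \<zero>\<^bsub>F\<^esub>))(k := v k)" by simp
  ultimately show "v \<in> (\<lambda>(w, c). w(k := c)) ` (pts k \<times> carrier F)"
    by (intro image_eqI[where x="(v(k := \<zero>\<^bsub>F\<^esub>), v k)"]) auto
next
  fix v assume "v \<in> (\<lambda>(w, c). w(k := c)) ` (pts k \<times> carrier F)"
  then obtain w c where "w \<in> pts k" "c \<in> carrier F" "v = w(k := c)" by auto
  thus "v \<in> pts (Suc k)" by (auto simp: pts_def less_Suc_eq)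
qed

lemma pts_Suc_inj: "inj_on (\<lambda>(w, c). w(k := c)) (pts k \<times> carrier F)"
proof (rule inj_onI, clarify)
  fix w c w' c' assume ww: "w \<in> pts k" "w' \<in> pts k" and e: "w(k := c) = w'(k := c')"
  have "c = c'" using fun_cong[OF e, of k] by simp
  moreover have "w = w'"
  proof
    fix i show "w i = w' i"
    proof (cases "i = k")
      case True thus ?thesis using ww by (simp add: pts_def)
    next
      case False thus ?thesis using fun_cong[OF e, of i] by simp
    qed
  qed
  ultimately show "w = w' \<and> c = c'" by simp
qed

lemma finite_pts: "finite (pts k)" and card_pts: "card (pts k) = q ^ k"
proof -
  have "finite (pts k) \<and> card (pts k) = q ^ k"
  proof (induct k)
    case 0
    have "pts 0 = {\<lambda>_. \<zero>\<^bsub>F\<^esub>}" by (auto simp: pts_def)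
    thus ?case by simp
  next
    case (Suc k)
    thus ?case using pts_Suc_inj[of k] finF
      by (simp add: pts_Suc card_image card_cartesian_product)
  qed
  thus "finite (pts k)" "card (pts k) = q ^ k" by auto
qed

lemma pts_carrier: "v \<in> pts k \<Longrightarrow> v i \<in> carrier F"
  by (cases "i < k") (auto simp: pts_def)

lemma lin_closed: "a \<in> {0..<k} \<rightarrow> carrier K \<Longrightarrow> v \<in> pts k \<Longrightarrow> lin k a v \<in> carrier K"
  unfolding lin_def by (intro K.finsum_closed) (auto simp: pts_carrier Pi_def)

lemma lin_upd: 
  assumes a: "a \<in> {0..<Suc k} \<rightarrow> carrier K" and w: "w \<in> pts k" and c: "c \<in> carrier F"
  shows "lin (Suc k) a (w(k := c)) = lin k a w \<oplus> a k \<otimes> \<sigma> c"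
proof -
  have "lin (Suc k) a (w(k := c)) = (\<Oplus>i\<in>insert k {0..<k}. a i \<otimes> \<sigma> ((w(k := c)) i))"
    unfolding lin_def by (simp add: atLeast0_lessThan_Suc)
  also have "\<dots> = a k \<otimes> \<sigma> c \<oplus> (\<Oplus>i\<in>{0..<k}. a i \<otimes> \<sigma> ((w(k := c)) i))"
    using a c w by (subst K.finsum_insert) (auto simp: pts_carrier Pi_def)
  also have "(\<Oplus>i\<in>{0..<k}. a i \<otimes> \<sigma> ((w(k := c)) i)) = lin k a w"
    unfolding lin_def by (intro K.finsum_cong') (use a w in \<open>auto simp: pts_carrier Pi_def\<close>)
  finally have eq: "lin (Suc k) a (w(k := c)) = a k \<otimes> \<sigma> c \<oplus> lin k a w" .
  have "a k \<in> carrier K" "lin k a w \<in> carrier K" using a w by (auto intro!: lin_closed simp: Pi_def)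
  thus ?thesis unfolding eq using c by (intro K.a_comm) auto
qed

lemma lin_upd_same: "a \<in> {0..<k} \<rightarrow> carrier K \<Longrightarrow> v \<in> pts k \<Longrightarrow> lin k (a(k := b)) v = lin k a v"
  unfolding lin_def by (intro K.finsum_cong') (auto simp: Pi_def pts_carrier)

lemma img_Suc:
  assumes a: "a \<in> {0..<Suc k} \<rightarrow> carrier K"
  shows "img (Suc k) a = ext (img k a) (a k)"
proof (intro equalityI subsetI)
  fix y assume "y \<in> img (Suc k) a"
  then obtain w c where wc: "w \<in> pts k" "c \<in> carrier F" "y = lin (Suc k) a (w(k:=c))"
    by (auto simp: img_def pts_Suc)
  thus "y \<in> ext (img k a) (a k)" using lin_upd[OF a wc(1,2)] by (auto simp: ext_def img_def)
next
  fix y assume "y \<in> ext (img k a) (a k)"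
  then obtain w c where wc: "w \<in> pts k" "c \<in> carrier F" "y = lin k a w \<oplus> a k \<otimes> \<sigma> c"
    by (auto simp: ext_def img_def)
  hence "y = lin (Suc k) a (w(k:=c))" using lin_upd[OF a wc(1,2)] by simp
  thus "y \<in> img (Suc k) a" unfolding img_def pts_Suc using wc by auto
qed

lemma img_0: "img 0 a = {\<zero>}"
  by (auto simp: img_def lin_def pts_def)

lemma fsub_neg: "fsub W \<Longrightarrow> x \<in> W \<Longrightarrow> \<ominus> x \<in> W"
proof -
  assume W: "fsub W" and x: "x \<in> W"
  have xc: "x \<in> carrier K" using W x by (auto simp: fsub_def)
  have "\<ominus>\<^bsub>F\<^esub> \<one>\<^bsub>F\<^esub> \<in> carrier F" by simp
  moreover have "\<forall>c\<in>carrier F. \<forall>x\<in>W. \<sigma> c \<otimes> x \<in> W" using W by (simp add: fsub_def)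
  ultimately have "\<sigma> (\<ominus>\<^bsub>F\<^esub> \<one>\<^bsub>F\<^esub>) \<otimes> x \<in> W" using x by blast
  moreover have "\<sigma> (\<ominus>\<^bsub>F\<^esub> \<one>\<^bsub>F\<^esub>) \<otimes> x = \<ominus> x" using xc
    by (simp add: K.l_minus)
  ultimately show ?thesis by simp
qed

lemma fsub_ext: assumes W: "fsub W" and b: "b \<in> carrier K" shows "fsub (ext W b)"
proof -
  have Wc: "W \<subseteq> carrier K" using W by (simp add: fsub_def)
  have "ext W b \<subseteq> carrier K" using Wc b by (auto simp: ext_def)
  moreover have "\<zero> \<in> ext W b"
  proof -
    have "\<zero> \<oplus> b \<otimes> \<sigma> \<zero>\<^bsub>F\<^esub> = \<zero>" using b by simp
    thus ?thesis using W unfolding ext_def fsub_def by (metis (mono_tags, lifting) F.zero_closed mem_Collect_eq)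
  qed
  moreover have "\<forall>x\<in>ext W b. \<forall>y\<in>ext W b. x \<oplus> y \<in> ext W b"
  proof (intro ballI)
    fix x y assume "x \<in> ext W b" "y \<in> ext W b"
    then obtain x1 c1 x2 c2 where h: "x1 \<in> W" "c1 \<in> carrier F" "x = x1 \<oplus> b \<otimes> \<sigma> c1"
      "x2 \<in> W" "c2 \<in> carrier F" "y = x2 \<oplus> b \<otimes> \<sigma> c2" by (auto simp: ext_def)
    have c: "x1 \<in> carrier K" "x2 \<in> carrier K" using h Wc by auto
    have s: "\<sigma> c1 \<in> carrier K" "\<sigma> c2 \<in> carrier K" using h by auto
    have "x \<oplus> y = (x1 \<oplus> x2) \<oplus> b \<otimes> (\<sigma> c1 \<oplus> \<sigma> c2)"
      using h c b s by algebra
    hence "x \<oplus> y = (x1 \<oplus> x2) \<oplus> b \<otimes> \<sigma> (c1 \<oplus>\<^bsub>F\<^esub> c2)" using h by simp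
    moreover have "x1 \<oplus> x2 \<in> W" using W h by (auto simp: fsub_def)
    ultimately show "x \<oplus> y \<in> ext W b" using h unfolding ext_def by blast
  qed
  moreover have "\<forall>d\<in>carrier F. \<forall>x\<in>ext W b. \<sigma> d \<otimes> x \<in> ext W b"
  proof (intro ballI)
    fix d x assume d: "d \<in> carrier F" and "x \<in> ext W b"
    then obtain x1 c1 where h: "x1 \<in> W" "c1 \<in> carrier F" "x = x1 \<oplus> b \<otimes> \<sigma> c1"
      by (auto simp: ext_def)
    have c: "x1 \<in> carrier K" using h Wc by auto
    have s: "\<sigma> c1 \<in> carrier K" "\<sigma> d \<in> carrier K" using h d by auto
    have "\<sigma> d \<otimes> x = \<sigma> d \<otimes> x1 \<oplus> b \<otimes> (\<sigma> d \<otimes> \<sigma> c1)"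
      using h c b s by algebra
    hence "\<sigma> d \<otimes> x = \<sigma> d \<otimes> x1 \<oplus> b \<otimes> \<sigma> (d \<otimes>\<^bsub>F\<^esub> c1)" using h d by simp
    moreover have "\<sigma> d \<otimes> x1 \<in> W" using W h d by (auto simp: fsub_def)
    ultimately show "\<sigma> d \<otimes> x \<in> ext W b" using h d unfolding ext_def by blast
  qed
  ultimately show ?thesis by (simp add: fsub_def)
qed

lemma ext_in: assumes W: "fsub W" and b: "b \<in> W" shows "ext W b = W"
proof (intro equalityI subsetI)
  fix x assume "x \<in> ext W b"
  then obtain x1 c1 where h: "x1 \<in> W" "c1 \<in> carrier F" "x = x1 \<oplus> b \<otimes> \<sigma> c1"
    by (auto simp: ext_def)
  have c: "x1 \<in> carrier K" "b \<in> carrier K" using h W b by (auto simp: fsub_def)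
  have "\<sigma> c1 \<otimes> b \<in> W" using W h b by (auto simp: fsub_def)
  hence "b \<otimes> \<sigma> c1 \<in> W" using c h by (simp add: K.m_comm)
  thus "x \<in> W" using W h by (auto simp: fsub_def)
next
  fix x assume x: "x \<in> W"
  have c: "x \<in> carrier K" "b \<in> carrier K" using x W b by (auto simp: fsub_def)
  have "x = x \<oplus> b \<otimes> \<sigma> \<zero>\<^bsub>F\<^esub>" using c by simp
  thus "x \<in> ext W b" unfolding ext_def using x by blast
qed

lemma ext_card: assumes W: "fsub W" and fin: "finite W" and b: "b \<in> carrier K" "b \<notin> W"
  shows "card (ext W b) = q * card W"
proof -
  have Wc: "W \<subseteq> carrier K" using W by (simp add: fsub_def)
  have eq: "ext W b = (\<lambda>(x, c). x \<oplus> b \<otimes> \<sigma> c) ` (W \<times> carrier F)"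
    unfolding ext_def by auto
  have "inj_on (\<lambda>(x, c). x \<oplus> b \<otimes> \<sigma> c) (W \<times> carrier F)"
  proof (rule inj_onI, clarify)
    fix x c x' c' assume h: "x \<in> W" "c \<in> carrier F" "x' \<in> W" "c' \<in> carrier F"
      and e: "x \<oplus> b \<otimes> \<sigma> c = x' \<oplus> b \<otimes> \<sigma> c'"
    have xc: "x \<in> carrier K" "x' \<in> carrier K" using h Wc by auto
    have cc: "c = c'"
    proof (rule ccontr)
      assume ne: "c \<noteq> c'"
      define d where "d = c \<ominus>\<^bsub>F\<^esub> c'"
      have d: "d \<in> carrier F" "d \<noteq> \<zero>\<^bsub>F\<^esub>"
      proof -
        show "d \<in> carrier F" using h unfolding d_def by simp
        show "d \<noteq> \<zero>\<^bsub>F\<^esub>"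
        proof
          assume "d = \<zero>\<^bsub>F\<^esub>"
          hence "\<ominus>\<^bsub>F\<^esub> c' \<oplus>\<^bsub>F\<^esub> c = \<zero>\<^bsub>F\<^esub>" using h unfolding d_def by (simp add: F.minus_eq F.a_comm)
          hence "c = c'" using h by (metis F.minus_equality F.minus_minus F.a_inv_closed)
          thus False using ne by simp
        qed
      qed
      have dinv: "inv\<^bsub>F\<^esub> d \<in> carrier F" "inv\<^bsub>F\<^esub> d \<otimes>\<^bsub>F\<^esub> d = \<one>\<^bsub>F\<^esub>"
        using d F.field_Units by auto
      have s: "\<sigma> c \<in> carrier K" "\<sigma> c' \<in> carrier K" using h by auto
      have "x' \<oplus> \<ominus> x = (x' \<oplus> b \<otimes> \<sigma> c') \<oplus> \<ominus> (b \<otimes> \<sigma> c') \<oplus> \<ominus> x"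
        using xc b s by algebra
      also have "\<dots> = (x \<oplus> b \<otimes> \<sigma> c) \<oplus> \<ominus> (b \<otimes> \<sigma> c') \<oplus> \<ominus> x" using e by simp
      also have "\<dots> = b \<otimes> (\<sigma> c \<oplus> \<ominus> \<sigma> c')" using xc b s by algebra
      finally have "b \<otimes> (\<sigma> c \<oplus> \<ominus> \<sigma> c') = x' \<oplus> \<ominus> x" by simp
      hence e2: "b \<otimes> \<sigma> d = x' \<ominus> x"
        using h unfolding d_def by (simp add: F.minus_eq K.minus_eq)
      have "x' \<ominus> x \<in> W" using W h fsub_neg[OF W h(1)] by (auto simp: fsub_def K.minus_eq)
      hence "\<sigma> (inv\<^bsub>F\<^esub> d) \<otimes> (x' \<ominus> x) \<in> W" using W dinv by (auto simp: fsub_def)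
      moreover have "\<sigma> (inv\<^bsub>F\<^esub> d) \<otimes> (x' \<ominus> x) = b"
      proof -
        have "\<sigma> (inv\<^bsub>F\<^esub> d) \<otimes> (x' \<ominus> x) = b \<otimes> (\<sigma> (inv\<^bsub>F\<^esub> d) \<otimes> \<sigma> d)"
        proof -
          have "\<sigma> (inv\<^bsub>F\<^esub> d) \<in> carrier K" "\<sigma> d \<in> carrier K" using d dinv by auto
          thus ?thesis unfolding e2[symmetric] using b by algebra
        qed
        also have "\<dots> = b" using dinv d b by (simp flip: H.hom_mult)
        finally show ?thesis .
      qed
      ultimately show False using b by simp
    qed
    have "x = x'" using e unfolding cc using xc b h by (simp add: K.add.right_cancel)
    thus "x = x' \<and> c = c'" using cc by simp
  qed
  thus ?thesis unfolding eq by (simp add: card_image card_cartesian_product mult.commute)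
qed

lemma fsub_img: "a \<in> {0..<k} \<rightarrow> carrier K \<Longrightarrow> fsub (img k a)"
proof (induct k arbitrary: a)
  case 0
  thus ?case by (simp add: img_0 fsub_def)
next
  case (Suc k)
  have "a \<in> {0..<k} \<rightarrow> carrier K" "a k \<in> carrier K" using Suc.prems by auto
  thus ?case using Suc img_Suc[OF Suc.prems] fsub_ext by simp
qed

lemma finite_img: "finite (img k a)"
  unfolding img_def using finite_pts by simp


end

context rmx begin

lemma img_card_pow: "a \<in> {0..<k} \<rightarrow> carrier K \<Longrightarrow> \<exists>r\<le>k. card (img k a) = q ^ r"
proof (induct k arbitrary: a)
  case 0 thus ?case by (simp add: img_0)
next
  case (Suc k)
  have a: "a \<in> {0..<k} \<rightarrow> carrier K" "a k \<in> carrier K" using Suc.prems by auto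
  obtain r where r: "r \<le> k" "card (img k a) = q ^ r" using Suc.hyps[OF a(1)] by blast
  show ?case
  proof (cases "a k \<in> img k a")
    case True
    thus ?thesis using r img_Suc[OF Suc.prems] ext_in[OF fsub_img[OF a(1)]] by (intro exI[of _ r]) simp
  next
    case False
    thus ?thesis using r img_Suc[OF Suc.prems] ext_card[OF fsub_img[OF a(1)] finite_img a(2)]
      by (intro exI[of _ "Suc r"]) simp
  qed
qed

lemma q_pow_inj: "q ^ m = q ^ n \<longleftrightarrow> m = n"
  using q_ge2 by (simp add: power_inject_exp)

definition rk :: "nat \<Rightarrow> (nat \<Rightarrow> 'b) \<Rightarrow> nat" where
  "rk k a = (THE r. card (img k a) = q ^ r)"

lemma rk: assumes "a \<in> {0..<k} \<rightarrow> carrier K" shows "card (img k a) = q ^ rk k a" "rk k a \<le> k"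
proof -
  obtain r where r: "r \<le> k" "card (img k a) = q ^ r" using img_card_pow[OF assms] by blast
  have "rk k a = r" unfolding rk_def using r q_pow_inj by (intro the_equality) auto
  thus "card (img k a) = q ^ rk k a" "rk k a \<le> k" using r by auto
qed

lemma rk_eqI: "a \<in> {0..<k} \<rightarrow> carrier K \<Longrightarrow> card (img k a) = q ^ r \<Longrightarrow> rk k a = r"
  using rk(1)[of a k] q_pow_inj by auto

lemma rk_Suc: assumes a: "a \<in> {0..<Suc k} \<rightarrow> carrier K"
  shows "rk (Suc k) a = (if a k \<in> img k a then rk k a else Suc (rk k a))"
proof -
  have a': "a \<in> {0..<k} \<rightarrow> carrier K" "a k \<in> carrier K" using a by auto
  show ?thesis
  proof (cases "a k \<in> img k a")
    case True
    thus ?thesis using rk[OF a'(1)] img_Suc[OF a] ext_in[OF fsub_img[OF a'(1)]]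
      by (auto intro!: rk_eqI[OF a])
  next
    case False
    thus ?thesis using rk[OF a'(1)] img_Suc[OF a] ext_card[OF fsub_img[OF a'(1)] finite_img a'(2)]
      by (auto intro!: rk_eqI[OF a])
  qed
qed

definition vadd :: "(nat \<Rightarrow> 'a) \<Rightarrow> (nat \<Rightarrow> 'a) \<Rightarrow> nat \<Rightarrow> 'a" where
  "vadd v w = (\<lambda>i. v i \<oplus>\<^bsub>F\<^esub> w i)"
definition vneg :: "(nat \<Rightarrow> 'a) \<Rightarrow> nat \<Rightarrow> 'a" where
  "vneg v = (\<lambda>i. \<ominus>\<^bsub>F\<^esub> v i)"

lemma vadd_pts: "v \<in> pts k \<Longrightarrow> w \<in> pts k \<Longrightarrow> vadd v w \<in> pts k"
  by (auto simp: vadd_def pts_def)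
lemma vneg_pts: "v \<in> pts k \<Longrightarrow> vneg v \<in> pts k"
  by (auto simp: vneg_def pts_def)

lemma lin_vadd: assumes a: "a \<in> {0..<k} \<rightarrow> carrier K" and v: "v \<in> pts k" and w: "w \<in> pts k"
  shows "lin k a (vadd v w) = lin k a v \<oplus> lin k a w"
proof -
  have "lin k a (vadd v w) = (\<Oplus>i\<in>{0..<k}. a i \<otimes> \<sigma> (v i) \<oplus> a i \<otimes> \<sigma> (w i))"
    unfolding lin_def vadd_def using a v w
    by (intro K.finsum_cong') (auto simp: Pi_def pts_carrier K.r_distr)
  also have "\<dots> = lin k a v \<oplus> lin k a w"
    unfolding lin_def using a v w by (intro K.finsum_addf) (auto simp: Pi_def pts_carrier)
  finally show ?thesis .
qed

lemma lin_zero: "a \<in> {0..<k} \<rightarrow> carrier K \<Longrightarrow> lin k a (\<lambda>_. \<zero>\<^bsub>F\<^esub>) = \<zero>"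
proof -
  assume a: "a \<in> {0..<k} \<rightarrow> carrier K"
  have "lin k a (\<lambda>_. \<zero>\<^bsub>F\<^esub>) = (\<Oplus>i\<in>{0..<k}. \<zero>)"
    unfolding lin_def using a by (intro K.finsum_cong') (auto simp: Pi_def)
  thus ?thesis by simp
qed

lemma lin_vneg: assumes a: "a \<in> {0..<k} \<rightarrow> carrier K" and v: "v \<in> pts k"
  shows "lin k a (vneg v) = \<ominus> lin k a v"
proof -
  have "vadd v (vneg v) = (\<lambda>_. \<zero>\<^bsub>F\<^esub>)" using v by (auto simp: vadd_def vneg_def pts_carrier F.r_neg)
  hence "lin k a v \<oplus> lin k a (vneg v) = \<zero>"
    using lin_vadd[OF a v vneg_pts[OF v]] lin_zero[OF a] by simp
  thus ?thesis using lin_closed[OF a v] lin_closed[OF a vneg_pts[OF v]]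
    by (metis K.add.inv_closed K.add.inv_equality K.a_comm K.minus_minus)
qed

definition fib :: "nat \<Rightarrow> (nat \<Rightarrow> 'b) \<Rightarrow> 'b \<Rightarrow> (nat \<Rightarrow> 'a) set" where
  "fib k a t = {v \<in> pts k. lin k a v = t}"

lemma fib_card_eq: assumes a: "a \<in> {0..<k} \<rightarrow> carrier K" and t: "t \<in> img k a"
  shows "card (fib k a t) = card (fib k a \<zero>)"
proof -
  obtain v0 where v0: "v0 \<in> pts k" "lin k a v0 = t" using t by (auto simp: img_def)
  have "fib k a t = vadd v0 ` fib k a \<zero>"
  proof (intro equalityI subsetI)
    fix v assume v: "v \<in> fib k a t"
    hence vp: "v \<in> pts k" "lin k a v = t" by (auto simp: fib_def)
    let ?u = "vadd (vneg v0) v"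
    have "?u \<in> pts k" using vp v0 by (intro vadd_pts vneg_pts)
    moreover have "lin k a ?u = \<zero>"
      using lin_vadd[OF a vneg_pts[OF v0(1)] vp(1)] lin_vneg[OF a v0(1)] v0 vp lin_closed[OF a vp(1)]
      by (simp add: K.l_neg)
    moreover have "v = vadd v0 ?u"
      using vp v0 by (auto simp: vadd_def vneg_def pts_carrier F.a_assoc[symmetric] F.r_neg intro!: ext)
    ultimately show "v \<in> vadd v0 ` fib k a \<zero>" by (auto simp: fib_def)
  next
    fix v assume "v \<in> vadd v0 ` fib k a \<zero>"
    then obtain u where u: "u \<in> pts k" "lin k a u = \<zero>" "v = vadd v0 u" by (auto simp: fib_def)
    thus "v \<in> fib k a t" using lin_vadd[OF a v0(1) u(1)] v0 lin_closed[OF a v0(1)]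
      by (auto simp: fib_def vadd_pts)
  qed
  moreover have "inj_on (vadd v0) (fib k a \<zero>)"
  proof (rule inj_onI)
    fix u u' assume "u \<in> fib k a \<zero>" "u' \<in> fib k a \<zero>" and e: "vadd v0 u = vadd v0 u'"
    hence uu: "u \<in> pts k" "u' \<in> pts k" by (auto simp: fib_def)
    show "u = u'"
    proof
      fix i
      have "v0 i \<oplus>\<^bsub>F\<^esub> u i = v0 i \<oplus>\<^bsub>F\<^esub> u' i" using fun_cong[OF e, of i] by (simp add: vadd_def)
      moreover have "u i \<in> carrier F" "u' i \<in> carrier F" "v0 i \<in> carrier F" using uu v0 by (auto simp: pts_carrier)
      ultimately show "u i = u' i" by (metis F.a_comm F.add.right_cancel)
    qed
  qed
  ultimately show ?thesis by (simp add: card_image)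
qed

lemma fib_card: assumes a: "a \<in> {0..<k} \<rightarrow> carrier K" and t: "t \<in> img k a"
  shows "card (fib k a t) = q ^ (k - rk k a)"
proof -
  have z: "\<zero> \<in> img k a" using fsub_img[OF a] by (simp add: fsub_def)
  have "pts k = (\<Union>t\<in>img k a. fib k a t)" by (auto simp: fib_def img_def)
  hence "card (pts k) = card (\<Union>t\<in>img k a. fib k a t)" by simp
  also have "\<dots> = (\<Sum>t\<in>img k a. card (fib k a t))"
    using finite_img finite_pts by (intro card_UN_disjoint) (auto simp: fib_def)
  also have "\<dots> = (\<Sum>t\<in>img k a. card (fib k a \<zero>))" using fib_card_eq[OF a] by simp
  also have "\<dots> = q ^ rk k a * card (fib k a \<zero>)" using rk[OF a] by simp
  finally have "q ^ k = q ^ rk k a * card (fib k a \<zero>)" using card_pts by simp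
  moreover have "q ^ k = q ^ rk k a * q ^ (k - rk k a)" using rk(2)[OF a] by (simp flip: power_add)
  ultimately have "card (fib k a \<zero>) = q ^ (k - rk k a)" using q_ge2 by simp
  thus ?thesis using fib_card_eq[OF a t] by simp
qed

end

lemma card_PiE_Suc:
  assumes B: "finite B"
  shows "card {f \<in> PiE {0..<Suc k} (\<lambda>_. B). P f} =
         (\<Sum>a \<in> PiE {0..<k} (\<lambda>_. B). card {b \<in> B. P (a(k := b))})"
proof -
  let ?S = "SIGMA a : PiE {0..<k} (\<lambda>_. B). {b \<in> B. P (a(k := b))}"
  have eq: "{f \<in> PiE {0..<Suc k} (\<lambda>_. B). P f} = (\<lambda>(a, b). a(k := b)) ` ?S"
  proof (intro equalityI subsetI)
    fix f assume f: "f \<in> {f \<in> PiE {0..<Suc k} (\<lambda>_. B). P f}"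
    have "f(k := undefined) \<in> PiE {0..<k} (\<lambda>_. B)" using f by (auto simp: PiE_def Pi_def extensional_def)
    moreover have "f k \<in> B" using f by auto
    moreover have "(f(k := undefined))(k := f k) = f" by simp
    ultimately show "f \<in> (\<lambda>(a, b). a(k := b)) ` ?S" using f
      by (intro image_eqI[where x="(f(k := undefined), f k)"]) auto
  next
    fix f assume "f \<in> (\<lambda>(a, b). a(k := b)) ` ?S"
    thus "f \<in> {f \<in> PiE {0..<Suc k} (\<lambda>_. B). P f}"
      by (auto simp: PiE_def Pi_def extensional_def)
  qed
  have inj: "inj_on (\<lambda>(a, b). a(k := b)) ?S"
  proof (rule inj_onI, clarify)
    fix a b a' b' assume h: "a \<in> PiE {0..<k} (\<lambda>_. B)" "a' \<in> PiE {0..<k} (\<lambda>_. B)"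
      and e: "a(k := b) = a'(k := b')"
    have "b = b'" using fun_cong[OF e, of k] by simp
    moreover have "a = a'"
    proof
      fix i show "a i = a' i"
      proof (cases "i = k")
        case True thus ?thesis using h by (auto simp: PiE_def extensional_def)
      next
        case False thus ?thesis using fun_cong[OF e, of i] by simp
      qed
    qed
    ultimately show "a = a' \<and> b = b'" by simp
  qed
  have "card {f \<in> PiE {0..<Suc k} (\<lambda>_. B). P f} = card ?S"
    unfolding eq using inj by (rule card_image)
  also have "\<dots> = (\<Sum>a \<in> PiE {0..<k} (\<lambda>_. B). card {b \<in> B. P (a(k := b))})"
    using B by (intro card_SigmaI) (auto intro: finite_PiE)
  finally show ?thesis .
qed

lemma sum_if_const: "finite A \<Longrightarrow> (\<Sum>a\<in>A. if P a then c else 0) = of_nat (card {a\<in>A. P a}) * (c :: 'z :: comm_semiring_1)"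
  by (simp flip: sum.inter_filter)

fun Gq :: "nat \<Rightarrow> nat \<Rightarrow> nat \<Rightarrow> nat" where
  "Gq q 0 r = (if r = 0 then 1 else 0)"
| "Gq q (Suc k) 0 = 1"
| "Gq q (Suc k) (Suc r) = Gq q k r + q ^ Suc r * Gq q k (Suc r)"

lemma Gq_0: "Gq q k 0 = 1" by (cases k) auto

context rmx begin

abbreviation Q where "Q \<equiv> card (carrier K)"

abbreviation AA :: "nat \<Rightarrow> (nat \<Rightarrow> 'b) set" where
  "AA k \<equiv> PiE {0..<k} (\<lambda>_. carrier K)"

definition Nk :: "nat \<Rightarrow> nat \<Rightarrow> nat" where
  "Nk k r = card {a \<in> AA k. rk k a = r}"

lemma img_upd: "a \<in> {0..<k} \<rightarrow> carrier K \<Longrightarrow> img k (a(k := b)) = img k a"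
  unfolding img_def using lin_upd_same by (auto simp: image_def)

lemma img_sub: "a \<in> {0..<k} \<rightarrow> carrier K \<Longrightarrow> img k a \<subseteq> carrier K"
  using fsub_img by (simp add: fsub_def)

lemma card_img_le: "a \<in> {0..<k} \<rightarrow> carrier K \<Longrightarrow> card (img k a) \<le> Q"
  using img_sub finK by (simp add: card_mono)

lemma count_b:
  assumes a: "a \<in> AA k"
  shows "int (card {b \<in> carrier K. rk (Suc k) (a(k := b)) = r'}) =
     (if rk k a = r' then int q ^ r' else 0) + (if Suc (rk k a) = r' then int Q - int q ^ rk k a else 0)"
proof -
  have a': "a \<in> {0..<k} \<rightarrow> carrier K" using a by auto
  have rkeq: "rk (Suc k) (a(k := b)) = (if b \<in> img k a then rk k a else Suc (rk k a))"
    if b: "b \<in> carrier K" for b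
  proof -
    have "a(k := b) \<in> {0..<Suc k} \<rightarrow> carrier K" using a' b by auto
    moreover have "rk k (a(k := b)) = rk k a" unfolding rk_def using img_upd[OF a'] by simp
    ultimately show ?thesis using rk_Suc img_upd[OF a'] by simp
  qed
  have c1: "card {b \<in> carrier K. b \<in> img k a} = q ^ rk k a"
    using img_sub[OF a'] rk[OF a'] by (simp add: Int_absorb1 Collect_conj_eq[symmetric] Int_def[symmetric] inf_commute)
  have c2: "int (card {b \<in> carrier K. b \<notin> img k a}) = int Q - int q ^ rk k a"
  proof -
    have "{b \<in> carrier K. b \<notin> img k a} = carrier K - img k a" by auto
    hence "card {b \<in> carrier K. b \<notin> img k a} = Q - card (img k a)"
      using img_sub[OF a'] finite_img by (simp add: card_Diff_subset)
    thus ?thesis using card_img_le[OF a'] rk[OF a'] by (simp add: of_nat_diff)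
  qed
  show ?thesis
  proof (cases "rk k a = r'")
    case True
    hence "{b \<in> carrier K. rk (Suc k) (a(k := b)) = r'} = {b \<in> carrier K. b \<in> img k a}"
      using rkeq by (auto split: if_splits)
    thus ?thesis using c1 True by simp
  next
    case False
    show ?thesis
    proof (cases "Suc (rk k a) = r'")
      case True
      hence "{b \<in> carrier K. rk (Suc k) (a(k := b)) = r'} = {b \<in> carrier K. b \<notin> img k a}"
        using rkeq by auto
      thus ?thesis using c2 True False by simp
    next
      case F2: False
      have e: "{b \<in> carrier K. rk (Suc k) (a(k := b)) = r'} = {}"
        using rkeq False F2 by (auto split: if_splits)
      show ?thesis using False F2 unfolding e by simp
    qed
  qed
qed

lemma finite_AA: "finite (AA k)"
  using finK by (intro finite_PiE) auto

lemma Nk_Suc: "int (Nk (Suc k) r') = int q ^ r' * int (Nk k r')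
   + (if r' \<ge> 1 then (int Q - int q ^ (r' - 1)) * int (Nk k (r' - 1)) else 0)"
proof -
  have "int (Nk (Suc k) r') = (\<Sum>a \<in> AA k. int (card {b \<in> carrier K. rk (Suc k) (a(k := b)) = r'}))"
    unfolding Nk_def using finK by (subst card_PiE_Suc) auto
  also have "\<dots> = (\<Sum>a \<in> AA k. (if rk k a = r' then int q ^ r' else 0)
        + (if rk k a = r' - 1 \<and> r' \<ge> 1 then int Q - int q ^ (r' - 1) else 0))"
    by (intro sum.cong refl, subst count_b) auto
  also have "\<dots> = int q ^ r' * int (Nk k r') + (if r' \<ge> 1 then (int Q - int q ^ (r' - 1)) * int (Nk k (r' - 1)) else 0)"
    unfolding sum.distrib Nk_def using finite_AA
    by (simp add: sum_if_const mult.commute)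
  finally show ?thesis .
qed

lemma Nk_formula: "int (Nk k r) = int (Gq q k r) * (\<Prod>j<r. int Q - int q ^ j)"
proof (induct k arbitrary: r)
  case 0
  have "AA 0 = {\<lambda>_. undefined}" by simp
  moreover have "rk 0 (\<lambda>_. undefined) = 0" by (intro rk_eqI) (auto simp: img_0)
  ultimately have "{a \<in> AA 0. rk 0 a = r} = (if r = 0 then {\<lambda>_. undefined} else {})" by auto
  thus ?case by (simp add: Nk_def)
next
  case (Suc k)
  show ?case
  proof (cases r)
    case 0 thus ?thesis using Nk_Suc[of k 0] Suc by (simp add: Gq_0)
  next
    case (Suc r0)
    have e1: "int (Nk (Suc k) (Suc r0)) = int q ^ Suc r0 * int (Nk k (Suc r0)) + (int Q - int q ^ r0) * int (Nk k r0)"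
      using Nk_Suc[of k "Suc r0"] by simp
    have e2: "int (Nk k (Suc r0)) = int (Gq q k (Suc r0)) * ((\<Prod>j<r0. int Q - int q ^ j) * (int Q - int q ^ r0))"
      using Suc.hyps[of "Suc r0"] by simp
    have e3: "int (Nk k r0) = int (Gq q k r0) * (\<Prod>j<r0. int Q - int q ^ j)" using Suc.hyps[of r0] .
    show ?thesis unfolding Suc e1 e2 e3 by (simp add: algebra_simps)
  qed
qed

end

lemma (in abelian_monoid) finsum_swap:
  assumes "finite A" "finite B" "\<And>x y. x \<in> A \<Longrightarrow> y \<in> B \<Longrightarrow> f x y \<in> carrier G"
  shows "(\<Oplus>x\<in>A. \<Oplus>y\<in>B. f x y) = (\<Oplus>y\<in>B. \<Oplus>x\<in>A. f x y)"
  using assms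
proof (induct A rule: finite_induct)
  case empty thus ?case by simp
next
  case (insert x A)
  have "(\<Oplus>x\<in>insert x A. \<Oplus>y\<in>B. f x y) = (\<Oplus>y\<in>B. f x y) \<oplus> (\<Oplus>x\<in>A. \<Oplus>y\<in>B. f x y)"
    using insert by (intro finsum_insert) (auto intro!: finsum_closed)
  also have "\<dots> = (\<Oplus>y\<in>B. f x y) \<oplus> (\<Oplus>y\<in>B. \<Oplus>x\<in>A. f x y)" using insert by simp
  also have "\<dots> = (\<Oplus>y\<in>B. f x y \<oplus> (\<Oplus>x\<in>A. f x y))"
    using insert by (intro finsum_addf[symmetric]) (auto intro!: finsum_closed)
  also have "\<dots> = (\<Oplus>y\<in>B. \<Oplus>x\<in>insert x A. f x y)"
    using insert by (intro finsum_cong' refl) (auto intro!: finsum_closed simp: finsum_insert)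
  finally show ?case .
qed

context rmx begin

definition word :: "nat \<Rightarrow> 'b \<Rightarrow> (nat \<Rightarrow> 'b) \<Rightarrow> (nat \<Rightarrow> 'a) \<Rightarrow> 'b" where
  "word k a0 a = (\<lambda>v. if v \<in> pts k then a0 \<oplus> lin k a v else \<zero>)"

definition evec :: "nat \<Rightarrow> nat \<Rightarrow> 'a" where
  "evec i = (\<lambda>t. if t = i then \<one>\<^bsub>F\<^esub> else \<zero>\<^bsub>F\<^esub>)"

lemma evec_pts: "i < k \<Longrightarrow> evec i \<in> pts k"
  by (auto simp: evec_def pts_def)

lemma zvec_pts: "(\<lambda>_. \<zero>\<^bsub>F\<^esub>) \<in> pts k"
  by (auto simp: pts_def)

lemma lin_evec: assumes a: "a \<in> {0..<k} \<rightarrow> carrier K" and i: "i < k"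
  shows "lin k a (evec i) = a i"
proof -
  have "lin k a (evec i) = (\<Oplus>j\<in>{0..<k}. if i = j then a j else \<zero>)"
    unfolding lin_def evec_def using a by (intro K.finsum_cong') (auto simp: Pi_def)
  also have "\<dots> = a i" using a i by (intro K.finsum_singleton) auto
  finally show ?thesis .
qed

lemma word_inj: "inj_on (\<lambda>(a0, a). word k a0 a) (carrier K \<times> AA k)"
proof (rule inj_onI, clarify)
  fix a0 a a0' a' assume h: "a0 \<in> carrier K" "a \<in> AA k" "a0' \<in> carrier K" "a' \<in> AA k"
    and e: "word k a0 a = word k a0' a'"
  have a: "a \<in> {0..<k} \<rightarrow> carrier K" "a' \<in> {0..<k} \<rightarrow> carrier K" using h by auto
  have "a0 = a0'" using fun_cong[OF e, of "\<lambda>_. \<zero>\<^bsub>F\<^esub>"] h zvec_pts[of k]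
    by (simp add: word_def lin_zero[OF a(1)] lin_zero[OF a(2)])
  moreover have "a = a'"
  proof (rule extensionalityI[where A="{0..<k}"])
    show "a \<in> extensional {0..<k}" "a' \<in> extensional {0..<k}" using h by (auto simp: PiE_def)
    fix i assume i: "i \<in> {0..<k}"
    have "a0 \<oplus> a i = a0' \<oplus> a' i" using fun_cong[OF e, of "evec i"] i evec_pts[of i k]
      by (simp add: word_def lin_evec[OF a(1)] lin_evec[OF a(2)])
    thus "a i = a' i" using \<open>a0 = a0'\<close> h i a by (metis K.a_comm K.add.right_cancel Pi_mem)
  qed
  ultimately show "a0 = a0' \<and> a = a'" by simp
qed

lemma RM_points_eq: "RM_points F (Suc k) = pts k"
  by (simp add: RM_points_def pts_def)

lemma ext_sub: "ext_code F K \<sigma> (pts k) (RM_code F (Suc k)) \<subseteq> (\<lambda>(a0, a). word k a0 a) ` (carrier K \<times> AA k)"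
proof
  fix c assume "c \<in> ext_code F K \<sigma> (pts k) (RM_code F (Suc k))"
  then obtain S l where S: "S \<subseteq> RM_code F (Suc k)" "finite S" "l \<in> S \<rightarrow> carrier K"
    and cv: "\<forall>v\<in>pts k. c v = (\<Oplus>c'\<in>S. l c' \<otimes> \<sigma> (c' v))"
    and co: "\<forall>v. v \<notin> pts k \<longrightarrow> c v = \<zero>"
    unfolding ext_code_def by blast
  have "\<forall>c'\<in>S. \<exists>b0. \<exists>b. b0 \<in> carrier F \<and> b \<in> {0..<k} \<rightarrow> carrier F \<and>
      (\<forall>v\<in>pts k. c' v = b0 \<oplus>\<^bsub>F\<^esub> (\<Oplus>\<^bsub>F\<^esub>i\<in>{0..<k}. b i \<otimes>\<^bsub>F\<^esub> v i))"
  proof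
    fix c' assume "c' \<in> S"
    hence "c' \<in> RM_code F (Suc k)" using S(1) by auto
    thus "\<exists>b0. \<exists>b. b0 \<in> carrier F \<and> b \<in> {0..<k} \<rightarrow> carrier F \<and>
      (\<forall>v\<in>pts k. c' v = b0 \<oplus>\<^bsub>F\<^esub> (\<Oplus>\<^bsub>F\<^esub>i\<in>{0..<k}. b i \<otimes>\<^bsub>F\<^esub> v i))"
      unfolding RM_code_def RM_points_eq by auto
  qed
  then obtain B0 B where B: "\<And>c'. c' \<in> S \<Longrightarrow> B0 c' \<in> carrier F \<and> B c' \<in> {0..<k} \<rightarrow> carrier F \<and>
      (\<forall>v\<in>pts k. c' v = B0 c' \<oplus>\<^bsub>F\<^esub> (\<Oplus>\<^bsub>F\<^esub>i\<in>{0..<k}. B c' i \<otimes>\<^bsub>F\<^esub> v i))"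
    by metis
  define a0 where "a0 = (\<Oplus>c'\<in>S. l c' \<otimes> \<sigma> (B0 c'))"
  define a where "a = (\<lambda>i\<in>{0..<k}. \<Oplus>c'\<in>S. l c' \<otimes> \<sigma> (B c' i))"
  have lc: "\<And>c'. c' \<in> S \<Longrightarrow> l c' \<in> carrier K" using S(3) by auto
  have Bc: "\<And>c' i. c' \<in> S \<Longrightarrow> i < k \<Longrightarrow> B c' i \<in> carrier F"
  proof -
    fix c' i assume "c' \<in> S" "i < k"
    hence "B c' \<in> {0..<k} \<rightarrow> carrier F" "i \<in> {0..<k}" using B by auto
    thus "B c' i \<in> carrier F" by auto
  qed
  have a0c: "a0 \<in> carrier K" unfolding a0_def using B lc by (intro K.finsum_closed) auto
  have aA: "a \<in> AA k" unfolding a_def using B lc Bc by (auto intro!: K.finsum_closed)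
  have "c = word k a0 a"
  proof
    fix v show "c v = word k a0 a v"
    proof (cases "v \<in> pts k")
      case False thus ?thesis using co by (simp add: word_def)
    next
      case True
      have vc: "\<And>i. v i \<in> carrier F" using True by (simp add: pts_carrier)
      have "c v = (\<Oplus>c'\<in>S. l c' \<otimes> \<sigma> (B0 c') \<oplus> (\<Oplus>i\<in>{0..<k}. (l c' \<otimes> \<sigma> (B c' i)) \<otimes> \<sigma> (v i)))"
        unfolding cv[rule_format, OF True]
      proof (intro K.finsum_cong' refl)
        fix c' assume c': "c' \<in> S"
        have b: "B0 c' \<in> carrier F" "B c' \<in> {0..<k} \<rightarrow> carrier F" using B[OF c'] by auto
        have e1: "\<sigma> (c' v) = \<sigma> (B0 c') \<oplus> (\<Oplus>i\<in>{0..<k}. \<sigma> (B c' i \<otimes>\<^bsub>F\<^esub> v i))"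
          using B[OF c'] True b vc by (simp add: Pi_def comp_def)
        have e2: "(\<Oplus>i\<in>{0..<k}. \<sigma> (B c' i \<otimes>\<^bsub>F\<^esub> v i)) = (\<Oplus>i\<in>{0..<k}. \<sigma> (B c' i) \<otimes> \<sigma> (v i))"
          using Bc[OF c'] vc by (intro K.finsum_cong') auto
        have "\<sigma> (c' v) = \<sigma> (B0 c') \<oplus> (\<Oplus>i\<in>{0..<k}. \<sigma> (B c' i) \<otimes> \<sigma> (v i))"
          using e1 e2 by simp
        moreover have e3: "(\<Oplus>i\<in>{0..<k}. l c' \<otimes> (\<sigma> (B c' i) \<otimes> \<sigma> (v i))) = (\<Oplus>i\<in>{0..<k}. l c' \<otimes> \<sigma> (B c' i) \<otimes> \<sigma> (v i))"
          using Bc[OF c'] vc lc[OF c'] by (intro K.finsum_cong') (auto simp: K.m_assoc)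
        ultimately show "l c' \<otimes> \<sigma> (c' v) = l c' \<otimes> \<sigma> (B0 c') \<oplus> (\<Oplus>i\<in>{0..<k}. (l c' \<otimes> \<sigma> (B c' i)) \<otimes> \<sigma> (v i))"
          using lc[OF c'] b vc
          by (simp add: K.r_distr K.finsum_rdistr Pi_def)
      next
        show "(\<lambda>c'. l c' \<otimes> \<sigma> (B0 c') \<oplus> (\<Oplus>i\<in>{0..<k}. l c' \<otimes> \<sigma> (B c' i) \<otimes> \<sigma> (v i))) \<in> S \<rightarrow> carrier K"
          using lc B Bc vc by (auto intro!: K.finsum_closed)
      qed
      also have "\<dots> = a0 \<oplus> (\<Oplus>c'\<in>S. \<Oplus>i\<in>{0..<k}. (l c' \<otimes> \<sigma> (B c' i)) \<otimes> \<sigma> (v i))"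
        unfolding a0_def using lc B Bc vc by (intro K.finsum_addf) (auto intro!: K.finsum_closed)
      also have "(\<Oplus>c'\<in>S. \<Oplus>i\<in>{0..<k}. (l c' \<otimes> \<sigma> (B c' i)) \<otimes> \<sigma> (v i))
           = (\<Oplus>i\<in>{0..<k}. \<Oplus>c'\<in>S. (l c' \<otimes> \<sigma> (B c' i)) \<otimes> \<sigma> (v i))"
        using lc Bc vc S(2) by (intro K.finsum_swap) auto
      also have "\<dots> = (\<Oplus>i\<in>{0..<k}. a i \<otimes> \<sigma> (v i))"
        unfolding a_def using lc Bc vc S(2)
        by (intro K.finsum_cong' refl) (auto simp: K.finsum_ldistr Pi_def intro!: K.finsum_closed)
      finally show ?thesis using True by (simp add: word_def lin_def)
    qed
  qed
  thus "c \<in> (\<lambda>(a0, a). word k a0 a) ` (carrier K \<times> AA k)" using a0c aA by auto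
qed

end

context rmx begin

definition g0 :: "nat \<Rightarrow> (nat \<Rightarrow> 'a) \<Rightarrow> 'a" where
  "g0 k = (\<lambda>v. if v \<in> pts k then \<one>\<^bsub>F\<^esub> else \<zero>\<^bsub>F\<^esub>)"
definition gi :: "nat \<Rightarrow> nat \<Rightarrow> (nat \<Rightarrow> 'a) \<Rightarrow> 'a" where
  "gi k i = (\<lambda>v. if v \<in> pts k then v i else \<zero>\<^bsub>F\<^esub>)"

lemma RM_code_eq: "RM_code F (Suc k) = {c. \<exists>a0 \<in> carrier F. \<exists>a \<in> {0..<k} \<rightarrow> carrier F.
      (\<forall>v \<in> pts k. c v = a0 \<oplus>\<^bsub>F\<^esub> (\<Oplus>\<^bsub>F\<^esub> i\<in>{0..<k}. a i \<otimes>\<^bsub>F\<^esub> v i)) \<and>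
      (\<forall>v. v \<notin> pts k \<longrightarrow> c v = \<zero>\<^bsub>F\<^esub>)}"
  by (simp add: RM_code_def RM_points_eq)

lemma g0_code: "g0 k \<in> RM_code F (Suc k)"
proof -
  have A1: "\<forall>v\<in>pts k. g0 k v = \<one>\<^bsub>F\<^esub> \<oplus>\<^bsub>F\<^esub> (\<Oplus>\<^bsub>F\<^esub>i\<in>{0..<k}. (\<lambda>_. \<zero>\<^bsub>F\<^esub>) i \<otimes>\<^bsub>F\<^esub> v i)"
  proof
    fix v assume v: "v \<in> pts k"
    have "(\<Oplus>\<^bsub>F\<^esub>i\<in>{0..<k}. (\<lambda>_. \<zero>\<^bsub>F\<^esub>) i \<otimes>\<^bsub>F\<^esub> v i) = (\<Oplus>\<^bsub>F\<^esub>i\<in>{0..<k}. \<zero>\<^bsub>F\<^esub>)"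
      using v by (intro F.finsum_cong') (auto simp: pts_carrier)
    thus "g0 k v = \<one>\<^bsub>F\<^esub> \<oplus>\<^bsub>F\<^esub> (\<Oplus>\<^bsub>F\<^esub>i\<in>{0..<k}. (\<lambda>_. \<zero>\<^bsub>F\<^esub>) i \<otimes>\<^bsub>F\<^esub> v i)"
      using v by (simp add: g0_def)
  qed
  have A2: "\<forall>v. v \<notin> pts k \<longrightarrow> g0 k v = \<zero>\<^bsub>F\<^esub>" by (simp add: g0_def)
  show ?thesis unfolding RM_code_eq mem_Collect_eq
    apply (rule bexI[where x="\<one>\<^bsub>F\<^esub>"], rule bexI[where x="\<lambda>_. \<zero>\<^bsub>F\<^esub>"])
    using A1 A2 by auto
qed

lemma gi_code: assumes i: "i < k" shows "gi k i \<in> RM_code F (Suc k)"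
proof -
  let ?a = "\<lambda>j. if j = i then \<one>\<^bsub>F\<^esub> else \<zero>\<^bsub>F\<^esub>"
  have A1: "\<forall>v\<in>pts k. gi k i v = \<zero>\<^bsub>F\<^esub> \<oplus>\<^bsub>F\<^esub> (\<Oplus>\<^bsub>F\<^esub>j\<in>{0..<k}. ?a j \<otimes>\<^bsub>F\<^esub> v j)"
  proof
    fix v assume v: "v \<in> pts k"
    have "(\<Oplus>\<^bsub>F\<^esub>j\<in>{0..<k}. ?a j \<otimes>\<^bsub>F\<^esub> v j) = (\<Oplus>\<^bsub>F\<^esub>j\<in>{0..<k}. if i = j then v j else \<zero>\<^bsub>F\<^esub>)"
      using v by (intro F.finsum_cong') (auto simp: pts_carrier)
    also have "\<dots> = v i" using i v by (intro F.finsum_singleton) (auto simp: pts_carrier)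
    finally show "gi k i v = \<zero>\<^bsub>F\<^esub> \<oplus>\<^bsub>F\<^esub> (\<Oplus>\<^bsub>F\<^esub>j\<in>{0..<k}. ?a j \<otimes>\<^bsub>F\<^esub> v j)"
      using v by (simp add: gi_def pts_carrier)
  qed
  have A2: "\<forall>v. v \<notin> pts k \<longrightarrow> gi k i v = \<zero>\<^bsub>F\<^esub>" by (simp add: gi_def)
  show ?thesis unfolding RM_code_eq mem_Collect_eq
    apply (rule bexI[where x="\<zero>\<^bsub>F\<^esub>"], rule bexI[where x="?a"])
    using A1 A2 by auto
qed

lemma gi_inj: "inj_on (gi k) {0..<k}"
proof (rule inj_onI, rule ccontr)
  fix i j assume i: "i \<in> {0..<k}" and j: "j \<in> {0..<k}" and e: "gi k i = gi k j" and ne: "i \<noteq> j"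
  have "gi k i (evec i) = \<one>\<^bsub>F\<^esub>" "gi k j (evec i) = \<zero>\<^bsub>F\<^esub>"
    using i ne evec_pts[of i k] by (auto simp: gi_def evec_def)
  thus False using e by simp
qed

lemma g0_notin: "g0 k \<notin> gi k ` {0..<k}"
proof
  assume "g0 k \<in> gi k ` {0..<k}"
  then obtain i where "g0 k = gi k i" by auto
  moreover have "g0 k (\<lambda>_. \<zero>\<^bsub>F\<^esub>) = \<one>\<^bsub>F\<^esub>" "gi k i (\<lambda>_. \<zero>\<^bsub>F\<^esub>) = \<zero>\<^bsub>F\<^esub>"
    using zvec_pts[of k] by (auto simp: g0_def gi_def)
  ultimately show False by simp
qed

lemma word_in_ext: assumes a0: "a0 \<in> carrier K" and a: "a \<in> AA k"
  shows "word k a0 a \<in> ext_code F K \<sigma> (pts k) (RM_code F (Suc k))"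
proof -
  define S where "S = insert (g0 k) (gi k ` {0..<k})"
  define l where "l = (\<lambda>c'. if c' = g0 k then a0 else a (inv_into {0..<k} (gi k) c'))"
  have a': "a \<in> {0..<k} \<rightarrow> carrier K" using a by auto
  have S: "S \<subseteq> RM_code F (Suc k)" "finite S" unfolding S_def using g0_code gi_code by auto
  have l: "l \<in> S \<rightarrow> carrier K"
    unfolding S_def l_def using a0 a' gi_inj by (auto simp: inv_into_f_f)
  have A1: "\<forall>v\<in>pts k. word k a0 a v = (\<Oplus>c'\<in>S. l c' \<otimes> \<sigma> (c' v))"
  proof
    fix v assume v: "v \<in> pts k"
    have vc: "\<And>i. v i \<in> carrier F" using v by (simp add: pts_carrier)
    have gc: "\<And>c'. c' \<in> S \<Longrightarrow> c' v \<in> carrier F" unfolding S_def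
      using v vc by (auto simp: g0_def gi_def)
    have "(\<Oplus>c'\<in>S. l c' \<otimes> \<sigma> (c' v)) = l (g0 k) \<otimes> \<sigma> (g0 k v) \<oplus> (\<Oplus>c'\<in>gi k ` {0..<k}. l c' \<otimes> \<sigma> (c' v))"
      unfolding S_def using g0_notin l gc unfolding S_def
      by (intro K.finsum_insert) (auto simp: Pi_def)
    also have "(\<Oplus>c'\<in>gi k ` {0..<k}. l c' \<otimes> \<sigma> (c' v)) = (\<Oplus>i\<in>{0..<k}. l (gi k i) \<otimes> \<sigma> (gi k i v))"
      using l gc gi_inj unfolding S_def by (intro K.finsum_reindex) (auto simp: Pi_def)
    also have "\<dots> = (\<Oplus>i\<in>{0..<k}. a i \<otimes> \<sigma> (v i))"
    proof (intro K.finsum_cong' refl)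
      fix i assume i: "i \<in> {0..<k}"
      have "gi k i \<noteq> g0 k" using g0_notin[of k] i by (metis imageI)
      moreover have "inv_into {0..<k} (gi k) (gi k i) = i" using gi_inj i by (simp add: inv_into_f_f)
      ultimately show "l (gi k i) \<otimes> \<sigma> (gi k i v) = a i \<otimes> \<sigma> (v i)"
        unfolding l_def using v by (simp add: gi_def[of k i])
    next
      show "(\<lambda>i. a i \<otimes> \<sigma> (v i)) \<in> {0..<k} \<rightarrow> carrier K" using a' vc by auto
    qed
    finally show "word k a0 a v = (\<Oplus>c'\<in>S. l c' \<otimes> \<sigma> (c' v))"
      using v a0 by (simp add: word_def lin_def l_def g0_def)
  qed
  have A2: "\<forall>v. v \<notin> pts k \<longrightarrow> word k a0 a v = \<zero>" by (simp add: word_def)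
  show ?thesis unfolding ext_code_def mem_Collect_eq
    apply (rule exI[where x=S], intro conjI S, rule bexI[where x=l])
    using A1 A2 l by auto
qed

lemma ext_eq: "ext_code F K \<sigma> (pts k) (RM_code F (Suc k)) = (\<lambda>(a0, a). word k a0 a) ` (carrier K \<times> AA k)"
  by (rule equalityI[OF ext_sub]) (auto intro: word_in_ext)

end

context rmx begin

lemma add_eq_zero_iff: "a0 \<in> carrier K \<Longrightarrow> x \<in> carrier K \<Longrightarrow> a0 \<oplus> x = \<zero> \<longleftrightarrow> x = \<ominus> a0"
  by (metis K.add.inv_equality K.a_comm K.r_neg)

lemma wt_word: assumes a: "a \<in> AA k" and a0: "a0 \<in> carrier K"
  shows "ham_wt K (pts k) (word k a0 a) = (if \<ominus> a0 \<in> img k a then q ^ k - q ^ (k - rk k a) else q ^ k)"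
proof -
  have a': "a \<in> {0..<k} \<rightarrow> carrier K" using a by auto
  have "{v \<in> pts k. word k a0 a v \<noteq> \<zero>} = pts k - fib k a (\<ominus> a0)"
    using add_eq_zero_iff[OF a0] lin_closed[OF a'] by (auto simp: word_def fib_def)
  moreover have "fib k a (\<ominus> a0) \<subseteq> pts k" by (auto simp: fib_def)
  ultimately have "ham_wt K (pts k) (word k a0 a) = q ^ k - card (fib k a (\<ominus> a0))"
    unfolding ham_wt_def using finite_pts card_pts by (simp add: card_Diff_subset finite_subset)
  moreover have "\<ominus> a0 \<notin> img k a \<Longrightarrow> fib k a (\<ominus> a0) = {}"
    unfolding fib_def img_def by (force simp: image_iff)
  ultimately show ?thesis using fib_card[OF a'] by auto
qed

lemma count_a0: assumes a: "a \<in> AA k"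
  shows "int (card {a0 \<in> carrier K. ham_wt K (pts k) (word k a0 a) = w}) =
    (if w = q ^ k - q ^ (k - rk k a) then int q ^ rk k a else 0) + (if w = q ^ k then int Q - int q ^ rk k a else 0)"
proof -
  have a': "a \<in> {0..<k} \<rightarrow> carrier K" using a by auto
  define r where "r = rk k a"
  have rk': "card (img k a) = q ^ r" "r \<le> k" using rk[OF a'] by (auto simp: r_def)
  have pos: "q ^ (k - r) > 0" using q_ge2 by simp
  have le: "q ^ (k - r) \<le> q ^ k" using q_ge2 by (intro power_increasing) auto
  have ne: "q ^ k - q ^ (k - r) \<noteq> q ^ k" using pos le by linarith
  define Y where "Y = {a0 \<in> carrier K. \<ominus> a0 \<in> img k a}"
  have Y: "Y = (\<lambda>x. \<ominus> x) ` img k a"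
  proof (intro equalityI subsetI)
    fix y assume "y \<in> Y"
    hence "y \<in> carrier K" "\<ominus> y \<in> img k a" by (auto simp: Y_def)
    thus "y \<in> (\<lambda>x. \<ominus> x) ` img k a" by (intro image_eqI[where x="\<ominus> y"]) auto
  next
    fix y assume "y \<in> (\<lambda>x. \<ominus> x) ` img k a"
    thus "y \<in> Y" using img_sub[OF a'] by (auto simp: Y_def)
  qed
  have cY: "card Y = q ^ r"
  proof -
    have "inj_on (\<lambda>x. \<ominus> x) (img k a)" using img_sub[OF a']
      by (intro inj_onI) (metis K.minus_minus subsetD)
    thus ?thesis unfolding Y using rk' by (simp add: card_image)
  qed
  have cY2: "int (card {a0 \<in> carrier K. \<ominus> a0 \<notin> img k a}) = int Q - int q ^ r"
  proof -
    have "{a0 \<in> carrier K. \<ominus> a0 \<notin> img k a} = carrier K - Y" by (auto simp: Y_def)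
    moreover have "Y \<subseteq> carrier K" by (auto simp: Y_def)
    ultimately have "card {a0 \<in> carrier K. \<ominus> a0 \<notin> img k a} = Q - card Y"
      using finK by (simp add: card_Diff_subset finite_subset)
    moreover have "card Y \<le> Q" using \<open>Y \<subseteq> carrier K\<close> finK by (simp add: card_mono)
    ultimately show ?thesis using cY by (simp add: of_nat_diff)
  qed
  have wt: "\<And>a0. a0 \<in> carrier K \<Longrightarrow> ham_wt K (pts k) (word k a0 a) =
     (if \<ominus> a0 \<in> img k a then q ^ k - q ^ (k - r) else q ^ k)"
    using wt_word[OF a] by (simp add: r_def)
  show ?thesis
  proof (cases "w = q ^ k - q ^ (k - r)")
    case True
    hence "{a0 \<in> carrier K. ham_wt K (pts k) (word k a0 a) = w} = Y"
      using wt ne by (auto simp: Y_def split: if_splits)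
    thus ?thesis using True cY ne by (simp add: r_def)
  next
    case F1: False
    show ?thesis
    proof (cases "w = q ^ k")
      case True
      hence "{a0 \<in> carrier K. ham_wt K (pts k) (word k a0 a) = w} = {a0 \<in> carrier K. \<ominus> a0 \<notin> img k a}"
        using wt ne by (auto split: if_splits)
      thus ?thesis using True cY2 ne by (simp add: r_def)
    next
      case False
      hence e: "{a0 \<in> carrier K. ham_wt K (pts k) (word k a0 a) = w} = {}"
        using wt F1 False by (auto split: if_splits)
      show ?thesis unfolding e using False F1 by (simp add: r_def)
    qed
  qed
qed

lemma count_total:
  "int (card {c \<in> ext_code F K \<sigma> (pts k) (RM_code F (Suc k)). ham_wt K (pts k) c = w}) =
   (\<Sum>r\<le>k. int (Gq q k r) * (\<Prod>j<r. int Q - int q ^ j) *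
      ((if w = q ^ k - q ^ (k - r) then int q ^ r else 0) + (if w = q ^ k then int Q - int q ^ r else 0)))"
proof -
  let ?W = "\<lambda>a a0. ham_wt K (pts k) (word k a0 a)"
  let ?S = "SIGMA a : AA k. {a0 \<in> carrier K. ?W a a0 = w}"
  have eq: "{c \<in> ext_code F K \<sigma> (pts k) (RM_code F (Suc k)). ham_wt K (pts k) c = w}
     = (\<lambda>(a, a0). word k a0 a) ` ?S"
    unfolding ext_eq by auto
  have inj: "inj_on (\<lambda>(a, a0). word k a0 a) ?S"
    using word_inj[of k] by (auto simp: inj_on_def)
  have "card {c \<in> ext_code F K \<sigma> (pts k) (RM_code F (Suc k)). ham_wt K (pts k) c = w}
      = (\<Sum>a\<in>AA k. card {a0 \<in> carrier K. ?W a a0 = w})"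
    unfolding eq card_image[OF inj] using finite_AA finK by (intro card_SigmaI) auto
  hence "int (card {c \<in> ext_code F K \<sigma> (pts k) (RM_code F (Suc k)). ham_wt K (pts k) c = w})
      = (\<Sum>a\<in>AA k. int (card {a0 \<in> carrier K. ?W a a0 = w}))" by simp
  also have "\<dots> = (\<Sum>a\<in>AA k. (\<lambda>r. (if w = q ^ k - q ^ (k - r) then int q ^ r else 0)
        + (if w = q ^ k then int Q - int q ^ r else 0)) (rk k a))"
    by (intro sum.cong refl) (simp add: count_a0)
  also have "\<dots> = (\<Sum>r\<in>{..k}. \<Sum>a\<in>{a \<in> AA k. rk k a = r}. (\<lambda>r. (if w = q ^ k - q ^ (k - r) then int q ^ r else 0)
        + (if w = q ^ k then int Q - int q ^ r else 0)) (rk k a))"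
    using finite_AA rk(2) by (intro sum.group[symmetric]) (auto simp: PiE_def Pi_def)
  also have "\<dots> = (\<Sum>r\<le>k. int (Nk k r) * ((if w = q ^ k - q ^ (k - r) then int q ^ r else 0)
        + (if w = q ^ k then int Q - int q ^ r else 0)))"
    unfolding Nk_def by (intro sum.cong refl) simp
  also have "\<dots> = (\<Sum>r\<le>k. int (Gq q k r) * (\<Prod>j<r. int Q - int q ^ j) *
      ((if w = q ^ k - q ^ (k - r) then int q ^ r else 0) + (if w = q ^ k then int Q - int q ^ r else 0)))"
    by (simp add: Nk_formula)
  finally show ?thesis .
qed

end

context rmx begin

lemma fsub_zero: "fsub {\<zero>}"
  by (auto simp: fsub_def)

lemma fsub_card_pow_aux:
  assumes W: "fsub W"
  shows "fsub U \<Longrightarrow> U \<subseteq> W \<Longrightarrow> card U = q ^ r \<Longrightarrow> \<exists>r'. card W = q ^ r'"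
proof (induct "card W - card U" arbitrary: U r rule: less_induct)
  case less
  have Wc: "W \<subseteq> carrier K" using W by (simp add: fsub_def)
  have finW: "finite W" using Wc finK finite_subset by blast
  show ?case
  proof (cases "U = W")
    case True thus ?thesis using less by blast
  next
    case False
    then obtain b where b: "b \<in> W" "b \<notin> U" using less.prems(2) by blast
    have bc: "b \<in> carrier K" using b Wc by auto
    have finU: "finite U" using less.prems(2) finW finite_subset by blast
    let ?U = "ext U b"
    have f: "fsub ?U" using fsub_ext[OF less.prems(1) bc] .
    have sub: "?U \<subseteq> W"
    proof
      fix y assume "y \<in> ?U"
      then obtain x c where h: "x \<in> U" "c \<in> carrier F" "y = x \<oplus> b \<otimes> \<sigma> c" by (auto simp: ext_def)
      have "\<sigma> c \<otimes> b \<in> W" using W h b by (auto simp: fsub_def)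
      hence "b \<otimes> \<sigma> c \<in> W" using bc h by (simp add: K.m_comm)
      moreover have "x \<in> W" using h less.prems(2) by auto
      ultimately show "y \<in> W" using W h by (auto simp: fsub_def)
    qed
    have c: "card ?U = q ^ Suc r" using ext_card[OF less.prems(1) finU bc b(2)] less.prems(3) by simp
    have "card U > 0" using less.prems(3) q_ge2 by simp
    hence "card ?U > card U" using c less.prems(3) q_ge2 by simp
    moreover have "card ?U \<le> card W" using sub finW by (simp add: card_mono)
    ultimately have "card W - card ?U < card W - card U" by linarith
    thus ?thesis using less.hyps f sub c by blast
  qed
qed

lemma fsub_card_pow: "fsub W \<Longrightarrow> \<exists>r. card W = q ^ r"
  using fsub_card_pow_aux[of W "{\<zero>}" 0] fsub_zero by (auto simp: fsub_def)

end

lemma ring_hom_restrict_carrier: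
  "h \<in> ring_hom R S \<Longrightarrow> h ` carrier R \<subseteq> E \<Longrightarrow> h \<in> ring_hom R (S\<lparr>carrier := E\<rparr>)"
  unfolding ring_hom_def by auto

lemma card_pow_of_good:
  fixes F :: "('a,'c) ring_scheme" and L :: "('b,'d) ring_scheme"
  assumes F: "field F" "finite (carrier F)" and L: "field L" and h: "h \<in> ring_hom F L"
    and E: "subfield E L" "h ` carrier F \<subseteq> E" "finite E"
  shows "\<exists>r. card E = card (carrier F) ^ r"
proof -
  interpret L: field L by fact
  have fE: "field (L\<lparr>carrier := E\<rparr>)" using L.subfield_iff(2)[OF E(1)] .
  have hE: "h \<in> ring_hom F (L\<lparr>carrier := E\<rparr>)" using ring_hom_restrict_carrier[OF h E(2)] .
  interpret R: rmx F "L\<lparr>carrier := E\<rparr>" h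
    using F fE hE E(3) by (simp add: rmx_def rmx_axioms_def)
  have "R.fsub E"
    unfolding R.fsub_def using subringE[OF subfieldE(1)[OF E(1)]] E(2) by auto
  thus ?thesis using R.fsub_card_pow by blast
qed

lemma field_card_ge2: "field F \<Longrightarrow> finite (carrier F) \<Longrightarrow> card (carrier F) \<ge> 2"
proof -
  assume F: "field F" "finite (carrier F)"
  interpret F: field F by fact
  have "{\<zero>\<^bsub>F\<^esub>, \<one>\<^bsub>F\<^esub>} \<subseteq> carrier F" by simp
  hence "card {\<zero>\<^bsub>F\<^esub>, \<one>\<^bsub>F\<^esub>} \<le> card (carrier F)" using F(2) by (rule card_mono[rotated])
  thus ?thesis using F.one_not_zero by simp
qed

lemma ext_step:
  fixes L :: "('b,'d) ring_scheme"
  assumes L: "algebraically_closed L" and sub: "subfield E L" and fin: "finite E"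
  shows "\<exists>E'. subfield E' L \<and> E \<subseteq> E' \<and> finite E' \<and> card E < card E'"
proof -
  interpret L: algebraically_closed L by fact
  have Ec: "E \<subseteq> carrier L" using subfieldE(3)[OF sub] .
  note sr = subringE[OF subfieldE(1)[OF sub]]
  define N where "N = card E"
  have N2: "N \<ge> 2"
  proof -
    have "{\<zero>\<^bsub>L\<^esub>, \<one>\<^bsub>L\<^esub>} \<subseteq> E" using sr by auto
    hence "card {\<zero>\<^bsub>L\<^esub>, \<one>\<^bsub>L\<^esub>} \<le> N" unfolding N_def using fin by (rule card_mono[rotated])
    thus ?thesis using L.one_not_zero by simp
  qed
  have ER: "field (L\<lparr>carrier := E\<rparr>)" using L.subfield_iff(2)[OF sub] .
  have fermat: "e [^]\<^bsub>L\<^esub> N = e" if e: "e \<in> E" for e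
  proof (cases "e = \<zero>\<^bsub>L\<^esub>")
    case True thus ?thesis using N2 by (simp add: L.nat_pow_zero)
  next
    case False
    interpret G: group "Multiplicative_Group.mult_of (L\<lparr>carrier := E\<rparr>)" using field.field_mult_group[OF ER] .
    have ec: "e \<in> carrier (Multiplicative_Group.mult_of (L\<lparr>carrier := E\<rparr>))" using e False Multiplicative_Group.carrier_mult_of by simp
    have ord: "Coset.order (Multiplicative_Group.mult_of (L\<lparr>carrier := E\<rparr>)) = N - 1"
      using field.order_mult_of[OF ER] fin by (simp add: Coset.order_def N_def)
    have "e [^]\<^bsub>Multiplicative_Group.mult_of (L\<lparr>carrier := E\<rparr>)\<^esub> (N - 1) = \<one>\<^bsub>L\<^esub>"
      using G.pow_order_eq_1[OF ec] unfolding ord by simp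
    hence "e [^]\<^bsub>L\<^esub> (N - 1) = \<one>\<^bsub>L\<^esub>"
      by (simp add: Multiplicative_Group.nat_pow_mult_of L.nat_pow_consistent[symmetric])
    moreover have "e [^]\<^bsub>L\<^esub> N = e [^]\<^bsub>L\<^esub> (N - 1) \<otimes>\<^bsub>L\<^esub> e"
      using N2 L.nat_pow_Suc[of e "N - 1"] by (simp add: Suc_diff_1[symmetric])
    ultimately show ?thesis using e Ec by auto
  qed
  define p where "p = (L.monom \<one>\<^bsub>L\<^esub> (N - 2) @ [\<ominus>\<^bsub>L\<^esub> \<one>\<^bsub>L\<^esub>]) @ [\<one>\<^bsub>L\<^esub>]"
  have p_set: "set p \<subseteq> E" unfolding p_def L.monom_def using sr by auto
  have p_ne: "p \<noteq> []" unfolding p_def by simp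
  have p_hd: "hd p = \<one>\<^bsub>L\<^esub>" unfolding p_def L.monom_def by simp
  have p_polyE: "p \<in> carrier (univ_poly L E)"
    unfolding univ_poly_carrier[symmetric] polynomial_def using p_set p_hd L.one_not_zero by simp
  have p_poly: "p \<in> carrier (poly_ring L)"
    unfolding univ_poly_carrier[symmetric] polynomial_def using p_set Ec p_hd L.one_not_zero by auto
  have deg: "length p - 1 = N" unfolding p_def L.monom_def using N2 by simp
  have eval_p: "L.eval p x = ((\<one>\<^bsub>L\<^esub> \<otimes>\<^bsub>L\<^esub> x [^]\<^bsub>L\<^esub> (N - 2)) \<otimes>\<^bsub>L\<^esub> x \<oplus>\<^bsub>L\<^esub> \<ominus>\<^bsub>L\<^esub> \<one>\<^bsub>L\<^esub>) \<otimes>\<^bsub>L\<^esub> x \<oplus>\<^bsub>L\<^esub> \<one>\<^bsub>L\<^esub>"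
    if x: "x \<in> carrier L" for x
  proof -
    have ms: "set (L.monom \<one>\<^bsub>L\<^esub> (N - 2)) \<subseteq> carrier L" by (auto simp: L.monom_def)
    have ms2: "set (L.monom \<one>\<^bsub>L\<^esub> (N - 2) @ [\<ominus>\<^bsub>L\<^esub> \<one>\<^bsub>L\<^esub>]) \<subseteq> carrier L" using ms by auto
    show ?thesis unfolding p_def
      using L.eval_append_aux[OF ms2 _ x] L.eval_append_aux[OF ms _ x] L.eval_monom[OF _ x] by simp
  qed
  have noroot: "L.eval p e = \<one>\<^bsub>L\<^esub>" if e: "e \<in> E" for e
  proof -
    have ec: "e \<in> carrier L" using e Ec by auto
    define y where "y = e [^]\<^bsub>L\<^esub> (N - 2)"
    have yc: "y \<in> carrier L" using ec by (simp add: y_def)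
    have "e [^]\<^bsub>L\<^esub> N = y \<otimes>\<^bsub>L\<^esub> e \<otimes>\<^bsub>L\<^esub> e"
    proof -
      have "N = Suc (Suc (N - 2))" using N2 by simp
      hence "e [^]\<^bsub>L\<^esub> N = e [^]\<^bsub>L\<^esub> (Suc (Suc (N - 2)))" by simp
      thus ?thesis unfolding y_def by (simp add: L.nat_pow_Suc)
    qed
    hence yee: "y \<otimes>\<^bsub>L\<^esub> e \<otimes>\<^bsub>L\<^esub> e = e" using fermat[OF e] by simp
    have "L.eval p e = ((\<one>\<^bsub>L\<^esub> \<otimes>\<^bsub>L\<^esub> y) \<otimes>\<^bsub>L\<^esub> e \<oplus>\<^bsub>L\<^esub> \<ominus>\<^bsub>L\<^esub> \<one>\<^bsub>L\<^esub>) \<otimes>\<^bsub>L\<^esub> e \<oplus>\<^bsub>L\<^esub> \<one>\<^bsub>L\<^esub>"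
      using eval_p[OF ec] by (simp add: y_def)
    also have "\<dots> = (y \<otimes>\<^bsub>L\<^esub> e \<otimes>\<^bsub>L\<^esub> e) \<oplus>\<^bsub>L\<^esub> \<ominus>\<^bsub>L\<^esub> e \<oplus>\<^bsub>L\<^esub> \<one>\<^bsub>L\<^esub>"
      using ec yc by algebra
    also have "\<dots> = e \<oplus>\<^bsub>L\<^esub> \<ominus>\<^bsub>L\<^esub> e \<oplus>\<^bsub>L\<^esub> \<one>\<^bsub>L\<^esub>" by (simp only: yee)
    also have "\<dots> = \<one>\<^bsub>L\<^esub>" using ec by algebra
    finally show ?thesis .
  qed
  have "L.splitted p" using L.roots_over_carrier[OF p_poly] .
  hence "size (L.roots p) = N" unfolding L.splitted_def using deg by simp
  hence "L.roots p \<noteq> {#}" using N2 by auto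
  then obtain \<alpha> where "\<alpha> \<in># L.roots p" by blast
  hence "L.is_root p \<alpha>" using L.roots_mem_iff_is_root[OF p_poly] by simp
  hence \<alpha>c: "\<alpha> \<in> carrier L" and \<alpha>0: "L.eval p \<alpha> = \<zero>\<^bsub>L\<^esub>" unfolding L.is_root_def by auto
  have \<alpha>E: "\<alpha> \<notin> E" using noroot \<alpha>0 L.one_not_zero by force
  have alg: "(L.algebraic over E) \<alpha>" using L.algebraicI[OF p_polyE p_ne \<alpha>0] .
  define E' where "E' = L.simple_extension E \<alpha>"
  have sub': "subfield E' L" unfolding E'_def using L.simple_extension_is_subfield[OF sub \<alpha>c] alg by simp
  have EE': "E \<subseteq> E'" unfolding E'_def using L.simple_extension_incl[OF Ec \<alpha>c] .
  have \<alpha>E': "\<alpha> \<in> E'" unfolding E'_def using L.simple_extension_mem[OF subfieldE(1)[OF sub] \<alpha>c] .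
  have fin': "finite E'"
  proof -
    let ?Us = "L.exp_base \<alpha> (length (L.Irr E \<alpha>) - 1)"
    have Us: "set ?Us \<subseteq> carrier L" using L.exp_base_closed[OF \<alpha>c] .
    have "E' = L.Span E ?Us" unfolding E'_def using L.Span_exp_base[OF sub \<alpha>c alg] by simp
    also have "\<dots> = {L.combine Ks ?Us | Ks. length Ks = length ?Us \<and> set Ks \<subseteq> E}"
      using L.Span_eq_combine_set_length_version[OF sub Us] .
    also have "\<dots> = (\<lambda>Ks. L.combine Ks ?Us) ` {Ks. set Ks \<subseteq> E \<and> length Ks = length ?Us}" by auto
    finally show ?thesis using finite_lists_length_eq[OF fin] by simp
  qed
  have "E \<subset> E'" using EE' \<alpha>E \<alpha>E' by auto
  hence "card E < card E'" using fin' by (rule psubset_card_mono[rotated])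
  thus ?thesis using sub' EE' fin' by blast
qed

lemma exists_big_field:
  fixes F :: "'a ring"
  assumes F: "field F" "finite (carrier F)"
  shows "\<exists>m>M. \<exists>(K :: nat ring) \<sigma>. field K \<and> card (carrier K) = card (carrier F) ^ m \<and> \<sigma> \<in> ring_hom F K"
proof -
  interpret F: field F by fact
  obtain L :: "((('a list \<times> nat) multiset) \<Rightarrow> 'a) ring" where alg: "algebraic_closure L (F.indexed_const ` carrier F)"
    and h: "F.indexed_const \<in> ring_hom F L" by (rule F.exists_closure)
  interpret L: algebraic_closure L "F.indexed_const ` carrier F" by fact
  have Lac: "algebraically_closed L" by unfold_locales
  define \<iota> :: "'a \<Rightarrow> ('a list \<times> nat) multiset \<Rightarrow> 'a" where "\<iota> = F.indexed_const"
  have h': "\<iota> \<in> ring_hom F L" using h by (simp add: \<iota>_def)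
  define Good where "Good E \<longleftrightarrow> subfield E L \<and> \<iota> ` carrier F \<subseteq> E \<and> finite E" for E
  have q2: "card (carrier F) \<ge> 2" using field_card_ge2[OF F] .
  have base: "Good (\<iota> ` carrier F)"
  proof -
    have hr: "ring_hom_ring F L \<iota>" using ring_hom_ringI2[OF F.ring_axioms L.ring_axioms h'] .
    have "subfield (\<iota> ` carrier F) L"
      using ring_hom_ring.img_is_subfield(2)[OF hr F.carrier_is_subfield L.one_not_zero] .
    thus ?thesis unfolding Good_def using F(2) by auto
  qed
  have step: "\<exists>E'. Good E' \<and> card E < card E'" if G: "Good E" for E
  proof -
    have "subfield E L" "finite E" using G unfolding Good_def by auto
    then obtain E' where E': "subfield E' L" "E \<subseteq> E'" "finite E'" "card E < card E'"
      using ext_step[OF Lac] by blast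
    have "\<iota> ` carrier F \<subseteq> E'" using G E'(2) unfolding Good_def by auto
    hence "Good E'" using E' unfolding Good_def by simp
    thus ?thesis using E'(4) by (intro exI[of _ E']) simp
  qed
  have big: "\<exists>E. Good E \<and> n < card E" for n
  proof (induct n)
    case 0
    have "carrier F \<noteq> {}" using F.zero_closed by blast
    hence "card (\<iota> ` carrier F) > 0" using F(2) by (simp add: card_gt_0_iff)
    thus ?case using base by blast
  next
    case (Suc n)
    then obtain E where "Good E" "n < card E" by blast
    then obtain E' where "Good E'" "card E < card E'" using step by blast
    thus ?case using \<open>n < card E\<close> by (intro exI[of _ E']) simp
  qed
  obtain E where E: "Good E" "card (carrier F) ^ M < card E" using big by blast
  have sub: "subfield E L" and incl: "\<iota> ` carrier F \<subseteq> E" and fin: "finite E"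
    using E(1) unfolding Good_def by auto
  have fL: "field L" using alg unfolding algebraic_closure_def by blast
  have ex: "\<exists>r. card E = card (carrier F) ^ r" by (rule card_pow_of_good[OF F(1) F(2) fL h' sub incl fin])
  then obtain r where r: "card E = card (carrier F) ^ r" by (elim exE)
  have lt: "card (carrier F) ^ M < card (carrier F) ^ r" using E(2) unfolding r .
  have q1: "1 < card (carrier F)" using q2 by linarith
  have rM: "M < r" using power_less_imp_less_exp[OF q1 lt] .
  have fE: "field (L\<lparr>carrier := E\<rparr>)" using L.subfield_iff(2)[OF sub] .
  obtain f :: "_ \<Rightarrow> nat" and n where f: "f ` E = {i. i < n}" "inj_on f E"
    using finite_imp_inj_to_nat_seg[OF fin] by blast
  define K where "K = image_ring f (L\<lparr>carrier := E\<rparr>)"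
  have inj: "inj_on f (carrier (L\<lparr>carrier := E\<rparr>))" using f by simp
  have fK: "field K" unfolding K_def using field.inj_imp_image_ring_is_field[OF fE inj] .
  have cK: "card (carrier K) = card E" unfolding K_def image_ring_carrier using inj by (simp add: card_image)
  have hom1: "\<iota> \<in> ring_hom F (L\<lparr>carrier := E\<rparr>)" using ring_hom_restrict_carrier[OF h' incl] .
  have hom2: "f \<in> ring_hom (L\<lparr>carrier := E\<rparr>) K"
    using inj_imp_image_ring_iso[OF inj] unfolding K_def ring_iso_def by auto
  have "f \<circ> \<iota> \<in> ring_hom F K" using ring_hom_trans[OF hom1 hom2] .
  thus ?thesis
  proof (intro exI conjI)
    show "M < r" by (rule rM)
    show "field K" by (rule fK)
    show "card (carrier K) = card (carrier F) ^ r" using cK r by simp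
  qed
qed

lemma gauss_split: "b \<le> a \<Longrightarrow> gauss_binom q a b =
   (\<Prod>i<b. real q ^ (a - i) - 1) / (\<Prod>i<b. real q ^ (i + 1) - 1)"
  unfolding gauss_binom_def by (simp add: prod_dividef)

lemma gauss_0: "gauss_binom q k 0 = 1" by (simp add: gauss_binom_def)

lemma gauss_big: "b > a \<Longrightarrow> gauss_binom q a b = 0" by (simp add: gauss_binom_def)

lemma den_nz: "q \<ge> 2 \<Longrightarrow> (\<Prod>i<b. real q ^ (i + 1) - 1) \<noteq> 0"
proof -
  assume q: "q \<ge> 2"
  have "real q ^ (i + 1) > 1" for i using q by (intro one_less_power) auto
  thus ?thesis by (auto simp: prod_zero_iff) (metis less_irrefl)
qed

lemma gauss_L1: assumes q: "q \<ge> 2" and r: "r \<le> k"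
  shows "gauss_binom q (Suc k) (Suc r) = (real q ^ (Suc k) - 1) / (real q ^ (Suc r) - 1) * gauss_binom q k r"
proof -
  have num: "(\<Prod>i<Suc r. real q ^ (Suc k - i) - 1) = (real q ^ Suc k - 1) * (\<Prod>i<r. real q ^ (k - i) - 1)"
    by (subst prod.lessThan_Suc_shift) simp
  have den: "(\<Prod>i<Suc r. real q ^ (i + 1) - 1) = (\<Prod>i<r. real q ^ (i + 1) - 1) * (real q ^ Suc r - 1)"
    by simp
  have d1: "real q ^ Suc r - 1 \<noteq> 0"
  proof -
    have "real q ^ Suc r > 1" using q by (intro one_less_power) auto
    thus ?thesis by simp
  qed
  have "gauss_binom q (Suc k) (Suc r) = (\<Prod>i<Suc r. real q ^ (Suc k - i) - 1) / (\<Prod>i<Suc r. real q ^ (i + 1) - 1)"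
    using r by (intro gauss_split) simp
  also have "\<dots> = ((real q ^ Suc k - 1) * (\<Prod>i<r. real q ^ (k - i) - 1)) /
      ((\<Prod>i<r. real q ^ (i + 1) - 1) * (real q ^ Suc r - 1))"
    by (simp only: num den)
  also have "\<dots> = (real q ^ (Suc k) - 1) / (real q ^ (Suc r) - 1) *
      ((\<Prod>i<r. real q ^ (k - i) - 1) / (\<Prod>i<r. real q ^ (i + 1) - 1))"
    by (simp add: field_simps)
  also have "\<dots> = (real q ^ (Suc k) - 1) / (real q ^ (Suc r) - 1) * gauss_binom q k r"
    using r by (simp add: gauss_split)
  finally show ?thesis .
qed

lemma gauss_L2: assumes q: "q \<ge> 2" and r: "r \<le> k"
  shows "gauss_binom q k (Suc r) = gauss_binom q k r * (real q ^ (k - r) - 1) / (real q ^ (Suc r) - 1)"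
proof (cases "r = k")
  case True thus ?thesis by (simp add: gauss_big)
next
  case False
  hence r': "Suc r \<le> k" using r by simp
  have d1: "real q ^ Suc r - 1 \<noteq> 0"
  proof -
    have "real q ^ Suc r > 1" using q by (intro one_less_power) auto
    thus ?thesis by simp
  qed
  show ?thesis using r r' den_nz[OF q, of r] d1
    by (simp add: gauss_split)
qed

lemma Gq_gauss: assumes q: "q \<ge> 2" shows "real (Gq q k r) = gauss_binom q k r"
proof (induct k arbitrary: r)
  case 0 thus ?case by (simp add: gauss_binom_def)
next
  case (Suc k)
  show ?case
  proof (cases r)
    case 0 thus ?thesis by (simp add: gauss_0)
  next
    case (Suc r0)
    show ?thesis
    proof (cases "r0 \<le> k")
      case False
      thus ?thesis using Suc.hyps Suc by (simp add: gauss_big)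
    next
      case True
      have d1: "real q ^ Suc r0 - 1 \<noteq> 0"
      proof -
        have "real q ^ Suc r0 > 1" using q by (intro one_less_power) auto
        thus ?thesis by simp
      qed
      have e: "real q ^ Suc r0 * real q ^ (k - r0) = real q ^ Suc k"
        using True by (simp flip: power_add)
      have "real (Gq q (Suc k) (Suc r0)) = gauss_binom q k r0 + real q ^ Suc r0 * gauss_binom q k (Suc r0)"
        using Suc.hyps by simp
      also have "\<dots> = gauss_binom q k r0 * (1 + real q ^ Suc r0 * (real q ^ (k - r0) - 1) / (real q ^ Suc r0 - 1))"
        using gauss_L2[OF q True] by (simp add: algebra_simps)
      also have "1 + real q ^ Suc r0 * (real q ^ (k - r0) - 1) / (real q ^ Suc r0 - 1) = (real q ^ Suc k - 1) / (real q ^ Suc r0 - 1)"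
        using d1 e by (simp add: field_simps)
      also have "gauss_binom q k r0 * \<dots> = gauss_binom q (Suc k) (Suc r0)"
        using gauss_L1[OF q True] by simp
      finally show ?thesis using Suc by simp
    qed
  qed
qed

lemma final_sum:
  fixes T X Y :: real and q k :: nat assumes q: "q \<ge> 2"
  shows "(\<Sum>w=0..q^k. (\<Sum>r\<le>k. real (Gq q k r) * (\<Prod>j<r. T - real (q^j)) *
      ((if w = q^k - q^(k-r) then real (q^r) else 0) + (if w = q^k then T - real (q^r) else 0))) * X^(q^k - w) * Y^w)
   = (\<Sum>r = 1..Suc k. (\<Prod>j<r. T - real q ^ j) * gauss_binom q k (r - 1)) * Y ^ (q ^ k)
    + (\<Sum>r = 0..k. (\<Prod>j<r. T - real q ^ j) * real q ^ r * gauss_binom q k r * X ^ (q ^ (k - r)) * Y ^ (q ^ k - q ^ (k - r)))"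
proof -
  let ?n = "q ^ k"
  let ?G = "\<lambda>r. real (Gq q k r) * (\<Prod>j<r. T - real (q^j))"
  have inner: "(\<Sum>w=0..?n. ?G r * ((if w = ?n - q^(k-r) then real (q^r) else 0) + (if w = ?n then T - real (q^r) else 0)) * X^(?n - w) * Y^w)
     = ?G r * (real (q^r) * X ^ (q ^ (k - r)) * Y ^ (?n - q ^ (k - r)) + (T - real (q^r)) * Y ^ ?n)" if r: "r \<le> k" for r
  proof -
    have le: "q ^ (k - r) \<le> ?n" using q by (intro power_increasing) auto
    have "(\<Sum>w=0..?n. ?G r * ((if w = ?n - q^(k-r) then real (q^r) else 0) + (if w = ?n then T - real (q^r) else 0)) * X^(?n - w) * Y^w)
       = (\<Sum>w=0..?n. (if w = ?n - q^(k-r) then ?G r * real (q^r) * X^(?n - w) * Y^w else 0)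
            + (if w = ?n then ?G r * (T - real (q^r)) * X^(?n - w) * Y^w else 0))"
      by (intro sum.cong refl) (simp add: algebra_simps)
    also have "\<dots> = ?G r * real (q^r) * X^(?n - (?n - q^(k-r))) * Y^(?n - q^(k-r)) + ?G r * (T - real (q^r)) * Y^?n"
      by (simp add: sum.distrib)
    also have "?n - (?n - q^(k-r)) = q^(k-r)" using le by simp
    finally show ?thesis by (simp add: algebra_simps)
  qed
  have "(\<Sum>w=0..?n. (\<Sum>r\<le>k. ?G r *
      ((if w = ?n - q^(k-r) then real (q^r) else 0) + (if w = ?n then T - real (q^r) else 0))) * X^(?n - w) * Y^w)
     = (\<Sum>r\<le>k. \<Sum>w=0..?n. ?G r * ((if w = ?n - q^(k-r) then real (q^r) else 0) + (if w = ?n then T - real (q^r) else 0)) * X^(?n - w) * Y^w)"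
    by (simp add: sum_distrib_right sum.swap[of _ "{0..?n}"])
  also have "\<dots> = (\<Sum>r\<le>k. ?G r * (real (q^r) * X ^ (q ^ (k - r)) * Y ^ (?n - q ^ (k - r)) + (T - real (q^r)) * Y ^ ?n))"
    by (intro sum.cong refl inner) simp
  also have "\<dots> = (\<Sum>r\<le>k. ?G r * (T - real (q^r)) * Y ^ ?n + ?G r * real (q^r) * X ^ (q ^ (k - r)) * Y ^ (?n - q ^ (k - r)))"
    by (intro sum.cong refl) (simp add: algebra_simps)
  also have "\<dots> = (\<Sum>r\<le>k. ?G r * (T - real (q^r)) * Y ^ ?n) + (\<Sum>r\<le>k. ?G r * real (q^r) * X ^ (q ^ (k - r)) * Y ^ (?n - q ^ (k - r)))"
    by (rule sum.distrib)
  also have "(\<Sum>r\<le>k. ?G r * (T - real (q^r)) * Y ^ ?n) = (\<Sum>r\<le>k. ?G r * (T - real (q^r))) * Y ^ ?n"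
    by (rule sum_distrib_right[symmetric])
  also have "(\<Sum>r\<le>k. ?G r * (T - real (q^r))) = (\<Sum>r = 1..Suc k. (\<Prod>j<r. T - real q ^ j) * gauss_binom q k (r - 1))"
  proof -
    have "(\<Sum>r = 1..Suc k. (\<Prod>j<r. T - real q ^ j) * gauss_binom q k (r - 1)) = (\<Sum>r = 0..k. (\<Prod>j<Suc r. T - real q ^ j) * gauss_binom q k r)"
      using sum.atLeast_Suc_atMost_Suc_shift[of "\<lambda>r. (\<Prod>j<r. T - real q ^ j) * gauss_binom q k (r - 1)" 0 k]
      by (simp add: comp_def)
    also have "\<dots> = (\<Sum>r\<le>k. ?G r * (T - real (q^r)))"
      by (simp add: atLeast0AtMost Gq_gauss[OF q] algebra_simps)
    finally show ?thesis by simp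
  qed
  also have "(\<Sum>r\<le>k. ?G r * real (q^r) * X ^ (q ^ (k - r)) * Y ^ (?n - q ^ (k - r)))
     = (\<Sum>r = 0..k. (\<Prod>j<r. T - real q ^ j) * real q ^ r * gauss_binom q k r * X ^ (q ^ (k - r)) * Y ^ (q ^ k - q ^ (k - r)))"
    by (simp add: atLeast0AtMost Gq_gauss[OF q] algebra_simps)
  finally show ?thesis .
qed

definition Apoly :: "nat \<Rightarrow> nat \<Rightarrow> nat \<Rightarrow> 'r::comm_ring_1 poly" where
  "Apoly q k w = (\<Sum>r\<le>k. Polynomial.smult (of_nat (Gq q k r)) (\<Prod>j<r. [:- of_nat (q ^ j), 1:]) *
      ([: if w = q ^ k - q ^ (k - r) then of_nat (q ^ r) else 0 :] + (if w = q ^ k then [:- of_nat (q ^ r), 1:] else 0)))"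

lemma poly_Apoly: "poly (Apoly q k w) x = (\<Sum>r\<le>k. of_nat (Gq q k r) * (\<Prod>j<r. x - of_nat (q ^ j)) *
   ((if w = q ^ k - q ^ (k - r) then of_nat (q ^ r) else 0) + (if w = q ^ k then x - of_nat (q ^ r) else 0)))"
proof -
  have e: "poly (if b then p else 0) x = (if b then poly p x else 0)" for b p by simp
  show ?thesis by (simp add: Apoly_def poly_sum poly_prod e mult.assoc cong: if_cong)
qed

lemma poly_map_of_int: "poly (map_poly (of_int :: int \<Rightarrow> 'a::comm_ring_1) p) (of_int x) = of_int (poly p x)"
  by (induct p) (auto simp: map_poly_pCons)

lemma map_Apoly: "map_poly (of_int :: int \<Rightarrow> real) (Apoly q k w) = Apoly q k w"
proof -
  let ?d = "map_poly (of_int :: int \<Rightarrow> real) (Apoly q k w) - Apoly q k w"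
  have z: "poly ?d (of_int x) = 0" for x :: int
    by (simp add: poly_map_of_int poly_Apoly of_int_sum of_int_prod if_distrib[where f=real_of_int] cong: if_cong)
  have "range (of_int :: int \<Rightarrow> real) \<subseteq> {x. poly ?d x = 0}" using z by auto
  moreover have "infinite (range (of_int :: int \<Rightarrow> real))"
    using infinite_UNIV_int by (simp add: finite_image_iff inj_on_def)
  ultimately have "infinite {x. poly ?d x = 0}" using finite_subset by blast
  hence "?d = 0" using poly_roots_finite by blast
  thus ?thesis by simp
qed

lemma count_poly:
  fixes F :: "'a ring" and K :: "nat ring"
  assumes F: "field F" "finite (carrier F)" and K: "field K" "finite (carrier K)" and h: "\<sigma> \<in> ring_hom F K"
  shows "int (card {c \<in> ext_code F K \<sigma> (RM_points F (Suc k)) (RM_code F (Suc k)).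
             ham_wt K (RM_points F (Suc k)) c = w}) = poly (Apoly (card (carrier F)) k w) (int (card (carrier K)))"
proof -
  interpret R: rmx F K \<sigma> using F K h by (simp add: rmx_def rmx_axioms_def)
  show ?thesis unfolding R.RM_points_eq R.count_total by (simp add: poly_Apoly cong: if_cong)
qed

lemma RM_ext_A_eq:
  fixes F :: "'a ring"
  assumes F: "field F" "finite (carrier F)"
  shows "RM_ext_A F (Suc k) w = Apoly (card (carrier F)) k w"
  unfolding RM_ext_A_def
proof (rule the_equality)
  let ?q = "card (carrier F)"
  show "\<forall>m\<ge>1. \<forall>(K :: nat ring) \<sigma>. field K \<and> card (carrier K) = ?q ^ m \<and> \<sigma> \<in> ring_hom F K \<longrightarrow>
      int (card {c \<in> ext_code F K \<sigma> (RM_points F (Suc k)) (RM_code F (Suc k)).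
                   ham_wt K (RM_points F (Suc k)) c = w}) = poly (Apoly ?q k w) (int (?q ^ m))"
  proof (intro allI impI)
    fix m and K :: "nat ring" and \<sigma> assume h: "field K \<and> card (carrier K) = ?q ^ m \<and> \<sigma> \<in> ring_hom F K"
    have "?q > 0" using field_card_ge2[OF F] by simp
    hence "card (carrier K) > 0" using h by simp
    hence fK: "finite (carrier K)" by (rule card_ge_0_finite)
    have hK: "field K" and hh: "\<sigma> \<in> ring_hom F K" and cK: "card (carrier K) = ?q ^ m" using h by auto
    show "int (card {c \<in> ext_code F K \<sigma> (RM_points F (Suc k)) (RM_code F (Suc k)).
                   ham_wt K (RM_points F (Suc k)) c = w}) = poly (Apoly ?q k w) (int (?q ^ m))"
      using count_poly[OF F hK fK hh, of k w] unfolding cK .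
  qed
next
  let ?q = "card (carrier F)"
  fix A assume PA: "\<forall>m\<ge>1. \<forall>(K :: nat ring) \<sigma>. field K \<and> card (carrier K) = ?q ^ m \<and> \<sigma> \<in> ring_hom F K \<longrightarrow>
      int (card {c \<in> ext_code F K \<sigma> (RM_points F (Suc k)) (RM_code F (Suc k)).
                   ham_wt K (RM_points F (Suc k)) c = w}) = poly A (int (?q ^ m))"
  let ?d = "A - Apoly ?q k w"
  have q2: "?q \<ge> 2" using field_card_ge2[OF F] .
  have root: "\<exists>m>M. poly ?d (int (?q ^ m)) = 0" for M
  proof -
    obtain m where "m > M" and "\<exists>(K :: nat ring) \<sigma>. field K \<and> card (carrier K) = ?q ^ m \<and> \<sigma> \<in> ring_hom F K"
      using exists_big_field[OF F, of M] by (elim exE conjE) auto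
    then obtain K :: "nat ring" and \<sigma> where m: "m > M" "field K" "card (carrier K) = ?q ^ m" "\<sigma> \<in> ring_hom F K"
      by (elim exE conjE) auto
    have "?q ^ m > 0" using q2 by simp
    hence "card (carrier K) > 0" using m(3) by simp
    hence fK: "finite (carrier K)" by (rule card_ge_0_finite)
    have m1: "1 \<le> m" using m(1) by simp
    have mm: "field K \<and> card (carrier K) = ?q ^ m \<and> \<sigma> \<in> ring_hom F K" using m by simp
    have e1: "int (card {c \<in> ext_code F K \<sigma> (RM_points F (Suc k)) (RM_code F (Suc k)).
                   ham_wt K (RM_points F (Suc k)) c = w}) = poly A (int (?q ^ m))"
      using PA[rule_format, OF m1 mm] .
    have e2: "int (card {c \<in> ext_code F K \<sigma> (RM_points F (Suc k)) (RM_code F (Suc k)).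
                   ham_wt K (RM_points F (Suc k)) c = w}) = poly (Apoly ?q k w) (int (?q ^ m))"
      using count_poly[OF F m(2) fK m(4), of k w] unfolding m(3) .
    show ?thesis using e1 e2 m(1) by auto
  qed
  have "infinite {m. poly ?d (int (?q ^ m)) = 0}"
    unfolding infinite_nat_iff_unbounded using root by blast
  moreover have "inj (\<lambda>m. int (?q ^ m))" using q2 by (auto simp: inj_on_def power_inject_exp)
  ultimately have "infinite ((\<lambda>m. int (?q ^ m)) ` {m. poly ?d (int (?q ^ m)) = 0})"
    by (simp add: finite_image_iff inj_on_subset)
  moreover have "(\<lambda>m. int (?q ^ m)) ` {m. poly ?d (int (?q ^ m)) = 0} \<subseteq> {x. poly ?d x = 0}" by auto
  ultimately have "infinite {x. poly ?d x = 0}" using finite_subset by blast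
  hence "?d = 0" using poly_roots_finite by blast
  thus "A = Apoly ?q k w" by simp
qed

theorem mainTheorem6:
  fixes F :: "'a ring" and q s :: nat
  assumes "field F" and "finite (carrier F)" and "card (carrier F) = q" and "s \<ge> 1"
  shows "\<forall>X Y T :: real. RM_ext_W F s X Y T =
      (\<Sum>r = 1..s. (\<Prod>j<r. T - real q ^ j) * gauss_binom q (s - 1) (r - 1)) * Y ^ (q ^ (s - 1))
    + (\<Sum>r = 0..s - 1. (\<Prod>j<r. T - real q ^ j) * real q ^ r * gauss_binom q (s - 1) r
         * X ^ (q ^ (s - 1 - r)) * Y ^ (q ^ (s - 1) - q ^ (s - 1 - r)))"
proof (intro allI)
  fix X Y T :: real
  obtain k where s: "s = Suc k" using assms(4) by (cases s) auto
  have q2: "q \<ge> 2" using field_card_ge2[OF assms(1,2)] assms(3) by simp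
  have "RM_ext_W F s X Y T = (\<Sum>w=0..q^k. poly (Apoly q k w) T * X^(q^k - w) * Y^w)"
    unfolding RM_ext_W_def s using RM_ext_A_eq[OF assms(1,2)] assms(3) by (simp add: map_Apoly)
  also have "\<dots> = (\<Sum>w=0..q^k. (\<Sum>r\<le>k. real (Gq q k r) * (\<Prod>j<r. T - real (q^j)) *
      ((if w = q^k - q^(k-r) then real (q^r) else 0) + (if w = q^k then T - real (q^r) else 0))) * X^(q^k - w) * Y^w)"
    by (simp add: poly_Apoly)
  also have "\<dots> = (\<Sum>r = 1..Suc k. (\<Prod>j<r. T - real q ^ j) * gauss_binom q k (r - 1)) * Y ^ (q ^ k)
    + (\<Sum>r = 0..k. (\<Prod>j<r. T - real q ^ j) * real q ^ r * gauss_binom q k r * X ^ (q ^ (k - r)) * Y ^ (q ^ k - q ^ (k - r)))"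
    by (rule final_sum[OF q2])
  finally show "RM_ext_W F s X Y T =
      (\<Sum>r = 1..s. (\<Prod>j<r. T - real q ^ j) * gauss_binom q (s - 1) (r - 1)) * Y ^ (q ^ (s - 1))
    + (\<Sum>r = 0..s - 1. (\<Prod>j<r. T - real q ^ j) * real q ^ r * gauss_binom q (s - 1) r
         * X ^ (q ^ (s - 1 - r)) * Y ^ (q ^ (s - 1) - q ^ (s - 1 - r)))" by (simp add: s)
qed

end
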